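(* Under the standing assumptions, $\mathbf l_j=Q_{2,j}^*(a)\,\widehat H_{2,j}^{-1}\,Q_{2,j}(a)$ for $0\le j\le n-1$ and $\mathbf m_j=\Gamma_{1,j}^*(a)\,\widehat K_{1,j}^{-1}\,\Gamma_{1,j}(a)$ for $0\le j\le n$; moreover all $\mathbf l_j$ ($0\le j\le n-1$) and $\mathbf m_j$ ($0\le j\le n$) are positive definite matrices.
   Context: Let $q,n\in\mathbb N$ and let $a<b$ be real numbers. All matrices are complex; $I_q$, $0_q$ are the $q\times q$ identity and zero matrices. Let $s_0,\dots,s_{2n+1}$ be Hermitian $q\times q$ matrices and set $\widehat s_j:=-ab\,s_j+(a+b)s_{j+1}-s_{j+2}$. Define $H_{1,j}:=(s_{l+k})_{l,k=0}^j$, $H_{2,j}:=(\widehat s_{l+k})_{l,k=0}^{j}$, $K_{1,j}:=(bs_{l+k}-s_{l+k+1})_{l,k=0}^{j}$, $K_{2,j}:=(-as_{l+k}+s_{l+k+1})_{l,k=0}^j$. Standing assumption: $H_{1,n},H_{2,n-1},K_{1,n},K_{2,n}$ are positive definite. Let $T_0:=0_q$ and, for $j\ge1$, let $T_j$ be the $(j+1)\times(j+1)$ block matrix (blocks $q\times q$) with $I_q$ in block positions $(l+1,l)$, $l=0,\dots,j-1$, and $0_q$ elsewhere; $R_j(z):=(I_{(j+1)q}-zT_j)^{-1}$; $v_j:=\mathrm{col}(I_q,0_q,\dots,0_q)\in\mathbb C^{(j+1)q\times q}$. Let $u_{2,0}:=-(a+b)s_0+s_1$, $u_{2,j}:=\mathrm{col}(u_{2,0},-\widehat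 s_0,\dots,-\widehat s_{j-1})$; for $j\ge1$, $Y_{2,j}:=\mathrm{col}(\widehat s_j,\dots,\widehat s_{2j-1})$, $\widetilde Y_{1,j}:=\mathrm{col}(bs_j-s_{j+1},\dots,bs_{2j-1}-s_{2j})$. Schur complements: $\widehat H_{2,0}:=\widehat s_0$, $\widehat H_{2,j}:=\widehat s_{2j}-Y_{2,j}^*H_{2,j-1}^{-1}Y_{2,j}$; $\widehat K_{1,0}:=bs_0-s_1$, $\widehat K_{1,j}:=bs_{2j}-s_{2j+1}-\widetilde Y_{1,j}^*K_{1,j-1}^{-1}\widetilde Y_{1,j}$. Polynomials: $Q_{2,0}(z):=-(u_{2,0}+zs_0)$, $\Gamma_{1,0}:=I_q$; for $j\ge1$: $Q_{2,j}(z):=-(-Y_{2,j}^*H_{2,j-1}^{-1},I_q)R_j(z)(u_{2,j}+zv_js_0)$, $\Gamma_{1,j}(z):=(-\widetilde Y_{1,j}^*K_{1,j-1}^{-1},I_q)R_j(z)v_j$. Dyukarev–Stieltjes matrix (DSM) parameters: let $\lambda_j:=(u_{2,j}+av_js_0)^*R_j^*(a)H_{2,j}^{-1}R_j(a)(u_{2,j}+av_js_0)$ ($0\le j\le n-1$) and $\mu_j:=v_j^*R_j^*(a)K_{1,j}^{-1}R_j(a)v_j$ ($0\le j\le n$). Set $\mathbf l_{-1}:=s_0$, $\mathbf l_0:=\lambda_0$, $\mathbf l_j:=\lambda_j-\lambda_{j-1}$ ($1\le j\le n-1$), and $\mathbf m_0:=\mu_0=(bs_0-s_1)^{-1}$,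 $\mathbf m_j:=\mu_j-\mu_{j-1}$ ($1\le j\le n$). *)

theory Defs
  imports "Jordan_Normal_Form.Schur_Decomposition"
begin

text \<open>Block matrices are represented as JNF matrices over complex numbers.
  A block matrix with r block rows and c block columns, all blocks of size q x q,
  whose block (l,k) is f l k.\<close>

definition blockmat :: "nat \<Rightarrow> nat \<Rightarrow> nat \<Rightarrow> (nat \<Rightarrow> nat \<Rightarrow> complex mat) \<Rightarrow> complex mat" where
  "blockmat q r c f = mat (r*q) (c*q) (\<lambda>(i,k). f (i div q) (k div q) $$ (i mod q, k mod q))"

definition rowcat :: "complex mat \<Rightarrow> complex mat \<Rightarrow> complex mat" where
  "rowcat A B = mat (dim_row A) (dim_col A + dim_col B)
     (\<lambda>(i,k). if k < dim_col A then A $$ (i,k) else B $$ (i, k - dim_col A))"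

text \<open>Inverse of a square matrix (unspecified if not invertible).\<close>
definition minv :: "complex mat \<Rightarrow> complex mat" where
  "minv A = (SOME B. B \<in> carrier_mat (dim_row A) (dim_row A) \<and> A * B = 1\<^sub>m (dim_row A)
                     \<and> B * A = 1\<^sub>m (dim_row A))"

definition hermitian :: "complex mat \<Rightarrow> bool" where
  "hermitian A \<longleftrightarrow> square_mat A \<and> mat_adjoint A = A"

definition pos_def :: "complex mat \<Rightarrow> bool" where
  "pos_def A \<longleftrightarrow> hermitian A \<and>
     (\<forall>v \<in> carrier_vec (dim_row A). v \<noteq> 0\<^sub>v (dim_row A) \<longrightarrow>
        (let x = conjugate v \<bullet> (A *\<^sub>v v) in Im x = 0 \<and> Re x > 0))"

definition shat :: "real \<Rightarrow> real \<Rightarrow> (nat \<Rightarrow> complex mat) \<Rightarrow> nat \<Rightarrow> complex mat" where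
  "shat a b s j = (- complex_of_real (a*b)) \<cdot>\<^sub>m s j + complex_of_real (a+b) \<cdot>\<^sub>m s (j+1) - s (j+2)"

definition hankel :: "nat \<Rightarrow> (nat \<Rightarrow> complex mat) \<Rightarrow> nat \<Rightarrow> complex mat" where
  "hankel q f j = blockmat q (j+1) (j+1) (\<lambda>l k. f (l+k))"

definition H1 :: "nat \<Rightarrow> (nat \<Rightarrow> complex mat) \<Rightarrow> nat \<Rightarrow> complex mat" where
  "H1 q s j = hankel q s j"
definition H2 :: "nat \<Rightarrow> real \<Rightarrow> real \<Rightarrow> (nat \<Rightarrow> complex mat) \<Rightarrow> nat \<Rightarrow> complex mat" where
  "H2 q a b s j = hankel q (shat a b s) j"
definition K1 :: "nat \<Rightarrow> real \<Rightarrow> (nat \<Rightarrow> complex mat) \<Rightarrow> nat \<Rightarrow> complex mat" where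
  "K1 q b s j = hankel q (\<lambda>i. complex_of_real b \<cdot>\<^sub>m s i - s (i+1)) j"
definition K2 :: "nat \<Rightarrow> real \<Rightarrow> (nat \<Rightarrow> complex mat) \<Rightarrow> nat \<Rightarrow> complex mat" where
  "K2 q a s j = hankel q (\<lambda>i. - (complex_of_real a \<cdot>\<^sub>m s i) + s (i+1)) j"

definition Tm :: "nat \<Rightarrow> nat \<Rightarrow> complex mat" where
  "Tm q j = blockmat q (j+1) (j+1) (\<lambda>l k. if l = k+1 then 1\<^sub>m q else 0\<^sub>m q q)"

definition Rm :: "nat \<Rightarrow> nat \<Rightarrow> complex \<Rightarrow> complex mat" where
  "Rm q j z = minv (1\<^sub>m ((j+1)*q) - z \<cdot>\<^sub>m Tm q j)"

definition vv :: "nat \<Rightarrow> nat \<Rightarrow> complex mat" where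
  "vv q j = blockmat q (j+1) 1 (\<lambda>l k. if l = 0 then 1\<^sub>m q else 0\<^sub>m q q)"

definition u20 :: "real \<Rightarrow> real \<Rightarrow> (nat \<Rightarrow> complex mat) \<Rightarrow> complex mat" where
  "u20 a b s = (- complex_of_real (a+b)) \<cdot>\<^sub>m s 0 + s 1"

definition u2 :: "nat \<Rightarrow> real \<Rightarrow> real \<Rightarrow> (nat \<Rightarrow> complex mat) \<Rightarrow> nat \<Rightarrow> complex mat" where
  "u2 q a b s j = blockmat q (j+1) 1
     (\<lambda>l k. if l = 0 then u20 a b s else - shat a b s (l - 1))"

definition Y2 :: "nat \<Rightarrow> real \<Rightarrow> real \<Rightarrow> (nat \<Rightarrow> complex mat) \<Rightarrow> nat \<Rightarrow> complex mat" where
  "Y2 q a b s j = blockmat q j 1 (\<lambda>l k. shat a b s (j+l))"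

definition Yt1 :: "nat \<Rightarrow> real \<Rightarrow> (nat \<Rightarrow> complex mat) \<Rightarrow> nat \<Rightarrow> complex mat" where
  "Yt1 q b s j = blockmat q j 1 (\<lambda>l k. complex_of_real b \<cdot>\<^sub>m s (j+l) - s (j+l+1))"

definition H2hat :: "nat \<Rightarrow> real \<Rightarrow> real \<Rightarrow> (nat \<Rightarrow> complex mat) \<Rightarrow> nat \<Rightarrow> complex mat" where
  "H2hat q a b s j = (if j = 0 then shat a b s 0 else
     shat a b s (2*j) - mat_adjoint (Y2 q a b s j) * minv (H2 q a b s (j-1)) * Y2 q a b s j)"

definition K1hat :: "nat \<Rightarrow> real \<Rightarrow> (nat \<Rightarrow> complex mat) \<Rightarrow> nat \<Rightarrow> complex mat" where
  "K1hat q b s j = (if j = 0 then complex_of_real b \<cdot>\<^sub>m s 0 - s 1 else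
     complex_of_real b \<cdot>\<^sub>m s (2*j) - s (2*j+1)
       - mat_adjoint (Yt1 q b s j) * minv (K1 q b s (j-1)) * Yt1 q b s j)"

definition Q2 :: "nat \<Rightarrow> real \<Rightarrow> real \<Rightarrow> (nat \<Rightarrow> complex mat) \<Rightarrow> nat \<Rightarrow> complex \<Rightarrow> complex mat" where
  "Q2 q a b s j z = (if j = 0 then - (u20 a b s + z \<cdot>\<^sub>m s 0) else
     - (rowcat (- (mat_adjoint (Y2 q a b s j) * minv (H2 q a b s (j-1)))) (1\<^sub>m q)
          * Rm q j z * (u2 q a b s j + z \<cdot>\<^sub>m (vv q j * s 0))))"

definition Gamma1 :: "nat \<Rightarrow> real \<Rightarrow> (nat \<Rightarrow> complex mat) \<Rightarrow> nat \<Rightarrow> complex \<Rightarrow> complex mat" where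
  "Gamma1 q b s j z = (if j = 0 then 1\<^sub>m q else
     rowcat (- (mat_adjoint (Yt1 q b s j) * minv (K1 q b s (j-1)))) (1\<^sub>m q)
          * Rm q j z * vv q j)"

definition lam :: "nat \<Rightarrow> real \<Rightarrow> real \<Rightarrow> (nat \<Rightarrow> complex mat) \<Rightarrow> nat \<Rightarrow> complex mat" where
  "lam q a b s j = (let w = u2 q a b s j + complex_of_real a \<cdot>\<^sub>m (vv q j * s 0);
                        R = Rm q j (complex_of_real a) in
     mat_adjoint w * mat_adjoint R * minv (H2 q a b s j) * R * w)"

definition mu :: "nat \<Rightarrow> real \<Rightarrow> real \<Rightarrow> (nat \<Rightarrow> complex mat) \<Rightarrow> nat \<Rightarrow> complex mat" where
  "mu q a b s j = (let R = Rm q j (complex_of_real a) in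
     mat_adjoint (vv q j) * mat_adjoint R * minv (K1 q b s j) * R * vv q j)"

definition lpar :: "nat \<Rightarrow> real \<Rightarrow> real \<Rightarrow> (nat \<Rightarrow> complex mat) \<Rightarrow> nat \<Rightarrow> complex mat" where
  "lpar q a b s j = (if j = 0 then lam q a b s 0 else lam q a b s j - lam q a b s (j-1))"

definition mpar :: "nat \<Rightarrow> real \<Rightarrow> real \<Rightarrow> (nat \<Rightarrow> complex mat) \<Rightarrow> nat \<Rightarrow> complex mat" where
  "mpar q a b s j = (if j = 0 then mu q a b s 0 else mu q a b s j - mu q a b s (j-1))"

end

theory Submission
  imports Defs
begin


section \<open>Adjoint basics\<close>

lemma adj_dim[simp]: "dim_row (mat_adjoint A) = dim_col A" "dim_col (mat_adjoint A) = dim_row A"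
  unfolding mat_adjoint_def by (auto simp: mat_of_rows_def)

lemma adj_index[simp]: "i < dim_col A \<Longrightarrow> j < dim_row A \<Longrightarrow> mat_adjoint A $$ (i,j) = cnj (A $$ (j,i))"
  unfolding mat_adjoint_def by (auto simp: mat_of_rows_def)

lemma adj_carrier[simp,intro]: "A \<in> carrier_mat n m \<Longrightarrow> mat_adjoint A \<in> carrier_mat m n"
  unfolding carrier_mat_def by simp

lemma adj_adj[simp]: "mat_adjoint (mat_adjoint (A::complex mat)) = A"
  by (rule eq_matI, auto)

lemma adj_mult: assumes "(A::complex mat) \<in> carrier_mat n m" "B \<in> carrier_mat m k"
  shows "mat_adjoint (A*B) = mat_adjoint B * mat_adjoint A"
proof (rule eq_matI)
  fix i j assume ij: "i < dim_row (mat_adjoint B * mat_adjoint A)" "j < dim_col (mat_adjoint B * mat_adjoint A)"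
  hence i: "i < k" and j: "j < n" using assms by auto
  have "mat_adjoint (A*B) $$ (i,j) = cnj (\<Sum>t<m. A $$ (j,t) * B $$ (t,i))"
    using assms i j by (auto simp: scalar_prod_def lessThan_atLeast0)
  also have "\<dots> = (\<Sum>t<m. cnj (B $$ (t,i)) * cnj (A $$ (j,t)))"
    by (simp add: mult.commute)
  also have "\<dots> = (mat_adjoint B * mat_adjoint A) $$ (i,j)"
    using assms i j by (auto simp: scalar_prod_def lessThan_atLeast0)
  finally show "mat_adjoint (A*B) $$ (i,j) = (mat_adjoint B * mat_adjoint A) $$ (i,j)" .
qed (use assms in auto)

lemma adj_add: assumes "(A::complex mat) \<in> carrier_mat n m" "B \<in> carrier_mat n m"
  shows "mat_adjoint (A+B) = mat_adjoint A + mat_adjoint B"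
  by (rule eq_matI, insert assms, auto)

lemma adj_minus: assumes "(A::complex mat) \<in> carrier_mat n m" "B \<in> carrier_mat n m"
  shows "mat_adjoint (A-B) = mat_adjoint A - mat_adjoint B"
  by (rule eq_matI, insert assms, auto)

lemma adj_uminus: "mat_adjoint (- (A::complex mat)) = - mat_adjoint A"
  by (rule eq_matI, auto)

lemma adj_one[simp]: "mat_adjoint (1\<^sub>m n :: complex mat) = 1\<^sub>m n"
  by (rule eq_matI, auto)

lemma adj_zero[simp]: "mat_adjoint (0\<^sub>m n m :: complex mat) = 0\<^sub>m m n"
  by (rule eq_matI, auto)

lemma adj_smult_real: "mat_adjoint (complex_of_real r \<cdot>\<^sub>m (A::complex mat)) = complex_of_real r \<cdot>\<^sub>m mat_adjoint A"
  by (rule eq_matI, auto)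

lemma adj_quad: assumes G: "(G::complex mat) \<in> carrier_mat m n" and v: "v \<in> carrier_vec n" and w: "w \<in> carrier_vec m"
  shows "conjugate v \<bullet> (mat_adjoint G *\<^sub>v w) = conjugate (G *\<^sub>v v) \<bullet> w"
proof -
  have "conjugate v \<bullet> (mat_adjoint G *\<^sub>v w) = (\<Sum>i<n. cnj (v$i) * (\<Sum>k<m. cnj (G$$(k,i)) * w$k))"
    using G v w by (auto simp: scalar_prod_def lessThan_atLeast0 intro!: sum.cong)
  also have "\<dots> = (\<Sum>i<n. \<Sum>k<m. cnj (v$i) * (cnj (G$$(k,i)) * w$k))"
    by (simp only: sum_distrib_left)
  also have "\<dots> = (\<Sum>k<m. \<Sum>i<n. cnj (v$i) * (cnj (G$$(k,i)) * w$k))"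
    by (rule sum.swap)
  also have "\<dots> = (\<Sum>k<m. (\<Sum>i<n. cnj (G$$(k,i)) * cnj (v$i)) * w$k)"
    by (simp add: sum_distrib_left sum_distrib_right mult_ac)
  also have "\<dots> = conjugate (G *\<^sub>v v) \<bullet> w"
    using G v w by (auto simp: scalar_prod_def lessThan_atLeast0 intro!: sum.cong)
  finally show ?thesis .
qed




section \<open>Inverses\<close>

lemma minv_props: assumes M: "(M::complex mat) \<in> carrier_mat n n"
  and inj: "\<And>v. v \<in> carrier_vec n \<Longrightarrow> M *\<^sub>v v = 0\<^sub>v n \<Longrightarrow> v = 0\<^sub>v n"
  shows "minv M \<in> carrier_mat n n" "M * minv M = 1\<^sub>m n" "minv M * M = 1\<^sub>m n"
proof -
  have "det M \<noteq> 0" using det_0_iff_vec_prod_zero_field[OF M] inj by auto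
  from det_non_zero_imp_unit[OF M this, of "()"] obtain B where B: "B \<in> carrier_mat n n" "B * M = 1\<^sub>m n" "M * B = 1\<^sub>m n"
    unfolding Units_def ring_mat_def by auto
  hence ex: "\<exists>B. B \<in> carrier_mat (dim_row M) (dim_row M) \<and> M * B = 1\<^sub>m (dim_row M) \<and> B * M = 1\<^sub>m (dim_row M)"
    using M by auto
  from someI_ex[OF ex] M show "minv M \<in> carrier_mat n n" "M * minv M = 1\<^sub>m n" "minv M * M = 1\<^sub>m n"
    unfolding minv_def by auto
qed

lemma minv_unique: assumes M: "(M::complex mat) \<in> carrier_mat n n" and B: "B \<in> carrier_mat n n"
  and Mi: "minv M \<in> carrier_mat n n" "minv M * M = 1\<^sub>m n" and MB: "M * B = 1\<^sub>m n"
  shows "minv M = B"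
proof -
  have "minv M = minv M * (M * B)" using MB Mi by simp
  also have "\<dots> = (minv M * M) * B" by (simp only: assoc_mult_mat[OF Mi(1) M B])
  also have "\<dots> = B" using Mi B by (simp del: assoc_mult_mat)
  finally show ?thesis .
qed

lemma minv_adj: assumes M: "(M::complex mat) \<in> carrier_mat n n" and h: "mat_adjoint M = M"
  and Mi: "minv M \<in> carrier_mat n n" "M * minv M = 1\<^sub>m n" "minv M * M = 1\<^sub>m n"
  shows "mat_adjoint (minv M) = minv M"
proof -
  have "mat_adjoint (M * minv M) = 1\<^sub>m n" using Mi by simp
  hence L: "mat_adjoint (minv M) * M = 1\<^sub>m n" using adj_mult[OF M Mi(1)] h by simp
  have "mat_adjoint (minv M) = mat_adjoint (minv M) * (M * minv M)" using Mi by simp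
  also have "\<dots> = (mat_adjoint (minv M) * M) * minv M" by (simp only: assoc_mult_mat[OF adj_carrier[OF Mi(1)] M Mi(1)])
  also have "\<dots> = minv M" using L Mi by (simp del: assoc_mult_mat)
  finally show ?thesis .
qed

section \<open>Positive definiteness\<close>

lemma hermitianD: "hermitian A \<Longrightarrow> A \<in> carrier_mat (dim_row A) (dim_row A)" "hermitian A \<Longrightarrow> mat_adjoint A = A"
  unfolding hermitian_def square_mat.simps carrier_mat_def by auto

lemma pd_herm: "pos_def A \<Longrightarrow> hermitian A" unfolding pos_def_def by auto

lemma pd_pos: "pos_def A \<Longrightarrow> v \<in> carrier_vec (dim_row A) \<Longrightarrow> v \<noteq> 0\<^sub>v (dim_row A) \<Longrightarrow>
   Im (conjugate v \<bullet> (A *\<^sub>v v)) = 0 \<and> Re (conjugate v \<bullet> (A *\<^sub>v v)) > 0"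
  unfolding pos_def_def Let_def by auto

lemma pd_inj: assumes "pos_def A" "A \<in> carrier_mat n n" "v \<in> carrier_vec n" "A *\<^sub>v v = 0\<^sub>v n"
  shows "v = 0\<^sub>v n"
proof (rule ccontr)
  assume "v \<noteq> 0\<^sub>v n"
  with pd_pos[OF assms(1), of v] assms carrier_matD[OF assms(2)] have "Re (conjugate v \<bullet> (A *\<^sub>v v)) > 0" by auto
  moreover have "conjugate v \<bullet> (A *\<^sub>v v) = 0" using assms by simp
  ultimately show False by simp
qed

lemma pd_minv: assumes "pos_def A" "A \<in> carrier_mat n n"
  shows "minv A \<in> carrier_mat n n" "A * minv A = 1\<^sub>m n" "minv A * A = 1\<^sub>m n"
  using minv_props[OF assms(2) pd_inj[OF assms]] by auto

lemma pd_minv_adj: assumes "pos_def A" "A \<in> carrier_mat n n"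
  shows "mat_adjoint (minv A) = minv A"
  using minv_adj[OF assms(2) _ pd_minv[OF assms]] hermitianD[OF pd_herm[OF assms(1)]] by auto

lemma pd_intro: assumes A: "A \<in> carrier_mat n n" and h: "mat_adjoint A = A"
  and pos: "\<And>v. v \<in> carrier_vec n \<Longrightarrow> v \<noteq> 0\<^sub>v n \<Longrightarrow> Im (conjugate v \<bullet> (A *\<^sub>v v)) = 0 \<and> Re (conjugate v \<bullet> (A *\<^sub>v v)) > 0"
  shows "pos_def A"
  using A h pos unfolding pos_def_def hermitian_def Let_def by auto

lemma pd_minv_pd: assumes pd: "pos_def A" and A: "A \<in> carrier_mat n n"
  shows "pos_def (minv A)"
proof -
  note Ai = pd_minv[OF assms]
  have hA: "mat_adjoint A = A" using hermitianD[OF pd_herm[OF pd]] by simp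
  show ?thesis
  proof (rule pd_intro[OF Ai(1) pd_minv_adj[OF assms]])
    fix v :: "complex vec" assume v: "v \<in> carrier_vec n" "v \<noteq> 0\<^sub>v n"
    define w where "w = minv A *\<^sub>v v"
    have w: "w \<in> carrier_vec n" using Ai v unfolding w_def by simp
    have Aw: "A *\<^sub>v w = v" unfolding w_def using Ai A v
      by (metis assoc_mult_mat_vec one_mult_mat_vec)
    have w0: "w \<noteq> 0\<^sub>v n" using Aw v A by auto
    have "conjugate v \<bullet> (minv A *\<^sub>v v) = conjugate (A *\<^sub>v w) \<bullet> w" using Aw w_def by simp
    also have "\<dots> = conjugate w \<bullet> (mat_adjoint A *\<^sub>v w)" using adj_quad[OF A w w] by simp
    also have "\<dots> = conjugate w \<bullet> (A *\<^sub>v w)" using hA by simp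
    finally show "Im (conjugate v \<bullet> (minv A *\<^sub>v v)) = 0 \<and> Re (conjugate v \<bullet> (minv A *\<^sub>v v)) > 0"
      using pd_pos[OF pd, of w] w w0 A by auto
  qed
qed

lemma pd_congr: assumes pd: "pos_def P" and P: "P \<in> carrier_mat q q" and G: "G \<in> carrier_mat q m"
  and inj: "\<And>v. v \<in> carrier_vec m \<Longrightarrow> G *\<^sub>v v = 0\<^sub>v q \<Longrightarrow> v = 0\<^sub>v m"
  shows "pos_def (mat_adjoint G * P * G)"
proof -
  have hP: "mat_adjoint P = P" using hermitianD[OF pd_herm[OF pd]] by simp
  have C: "mat_adjoint G * P * G \<in> carrier_mat m m" using P G by auto
  have h: "mat_adjoint (mat_adjoint G * P * G) = mat_adjoint G * P * G"
  proof -
    have "mat_adjoint (mat_adjoint G * P * G) = mat_adjoint G * mat_adjoint (mat_adjoint G * P)"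
      using adj_mult[OF mult_carrier_mat[OF adj_carrier[OF G] P] G] by simp
    also have "mat_adjoint (mat_adjoint G * P) = P * G"
      using adj_mult[OF adj_carrier[OF G] P] hP by simp
    finally show ?thesis using assoc_mult_mat[OF adj_carrier[OF G] P G] by simp
  qed
  show ?thesis
  proof (rule pd_intro[OF C h])
    fix v :: "complex vec" assume v: "v \<in> carrier_vec m" "v \<noteq> 0\<^sub>v m"
    have Gv: "G *\<^sub>v v \<in> carrier_vec q" "G *\<^sub>v v \<noteq> 0\<^sub>v q" using G v inj by auto
    have "conjugate v \<bullet> ((mat_adjoint G * P * G) *\<^sub>v v) = conjugate v \<bullet> (mat_adjoint G *\<^sub>v (P *\<^sub>v (G *\<^sub>v v)))"
      using assoc_mult_mat_vec[OF mult_carrier_mat[OF adj_carrier[OF G] P] G v(1)]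
        assoc_mult_mat_vec[OF adj_carrier[OF G] P Gv(1)] by simp
    also have "\<dots> = conjugate (G *\<^sub>v v) \<bullet> (P *\<^sub>v (G *\<^sub>v v))" using adj_quad[OF G v(1)] P Gv by simp
    finally show "Im (conjugate v \<bullet> ((mat_adjoint G * P * G) *\<^sub>v v)) = 0 \<and> Re (conjugate v \<bullet> ((mat_adjoint G * P * G) *\<^sub>v v)) > 0"
      using pd_pos[OF pd, of "G *\<^sub>v v"] Gv P by auto
  qed
qed




definition vst :: "complex mat \<Rightarrow> complex mat \<Rightarrow> complex mat" where
  "vst X Y = mat (dim_row X + dim_row Y) (dim_col X)
     (\<lambda>(i,k). if i < dim_row X then X $$ (i,k) else Y $$ (i - dim_row X, k))"

lemma vst_dims[simp]: "dim_row (vst X Y) = dim_row X + dim_row Y" "dim_col (vst X Y) = dim_col X"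
  unfolding vst_def by auto

lemma vst_index: "i < dim_row X + dim_row Y \<Longrightarrow> k < dim_col X \<Longrightarrow>
  vst X Y $$ (i,k) = (if i < dim_row X then X $$ (i,k) else Y $$ (i - dim_row X, k))"
  unfolding vst_def by auto

lemma vst_carrier[simp,intro]: "X \<in> carrier_mat r1 m \<Longrightarrow> Y \<in> carrier_mat r2 m \<Longrightarrow> vst X Y \<in> carrier_mat (r1+r2) m"
  unfolding carrier_mat_def by simp

lemma col_vst: assumes "X \<in> carrier_mat r1 m" "Y \<in> carrier_mat r2 m" "k < m"
  shows "col (vst X Y) k = col X k @\<^sub>v col Y k"
  by (rule eq_vecI, insert assms, auto simp: vst_index)

lemma rowcat_dims[simp]: "dim_row (rowcat P Q) = dim_row P" "dim_col (rowcat P Q) = dim_col P + dim_col Q"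
  unfolding rowcat_def by auto

lemma rowcat_carrier[simp,intro]: "P \<in> carrier_mat m r1 \<Longrightarrow> Q \<in> carrier_mat m r2 \<Longrightarrow> rowcat P Q \<in> carrier_mat m (r1+r2)"
  unfolding carrier_mat_def by simp

lemma row_rowcat: assumes "P \<in> carrier_mat m r1" "Q \<in> carrier_mat m r2" "i < m"
  shows "row (rowcat P Q) i = row P i @\<^sub>v row Q i"
  by (rule eq_vecI, insert assms, auto simp: rowcat_def)

lemma mult_4b_vst: assumes A: "A \<in> carrier_mat r1 n1" and B: "B \<in> carrier_mat r1 n2"
  and C: "C \<in> carrier_mat r2 n1" and D: "D \<in> carrier_mat r2 n2"
  and X: "X \<in> carrier_mat n1 m" and Y: "Y \<in> carrier_mat n2 m"
  shows "four_block_mat A B C D * vst X Y = vst (A*X + B*Y) (C*X + D*Y)"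
proof (rule eq_matI)
  fix i k assume "i < dim_row (vst (A*X + B*Y) (C*X + D*Y))" "k < dim_col (vst (A*X + B*Y) (C*X + D*Y))"
  hence i: "i < r1 + r2" and k: "k < m" using A B C D X Y by auto
  have cv: "col (vst X Y) k = col X k @\<^sub>v col Y k" by (rule col_vst[OF X Y k])
  show "(four_block_mat A B C D * vst X Y) $$ (i,k) = vst (A*X + B*Y) (C*X + D*Y) $$ (i,k)"
  proof (cases "i < r1")
    case True
    have "(four_block_mat A B C D * vst X Y) $$ (i,k) = (row A i @\<^sub>v row B i) \<bullet> (col X k @\<^sub>v col Y k)"
      using i k A B C D X Y True row_four_block_mat(1)[OF A B C D True] cv by simp
    also have "\<dots> = row A i \<bullet> col X k + row B i \<bullet> col Y k"
      by (rule scalar_prod_append[of _ n1 _ n2], insert A B X Y True k, auto)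
    finally show ?thesis using True i k A B C D X Y by (simp add: vst_index)
  next
    case False
    have "(four_block_mat A B C D * vst X Y) $$ (i,k) = (row C (i-r1) @\<^sub>v row D (i-r1)) \<bullet> (col X k @\<^sub>v col Y k)"
      using i k A B C D X Y False row_four_block_mat(2)[OF A B C D False i] cv by simp
    also have "\<dots> = row C (i-r1) \<bullet> col X k + row D (i-r1) \<bullet> col Y k"
      by (rule scalar_prod_append[of _ n1 _ n2], insert C D X Y False i k, auto)
    finally show ?thesis using False i k A B C D X Y by (simp add: vst_index)
  qed
qed (insert A B C D X Y, auto)

lemma rowcat_vst: assumes P: "P \<in> carrier_mat m r1" and Q: "Q \<in> carrier_mat m r2"
  and X: "X \<in> carrier_mat r1 k" and Y: "Y \<in> carrier_mat r2 k"
  shows "rowcat P Q * vst X Y = P * X + Q * Y"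
proof (rule eq_matI)
  fix i j assume "i < dim_row (P * X + Q * Y)" "j < dim_col (P * X + Q * Y)"
  hence i: "i < m" and j: "j < k" using P Q X Y by auto
  have "(rowcat P Q * vst X Y) $$ (i,j) = (row P i @\<^sub>v row Q i) \<bullet> (col X j @\<^sub>v col Y j)"
    using i j P Q X Y row_rowcat[OF P Q i] col_vst[OF X Y j] by simp
  also have "\<dots> = row P i \<bullet> col X j + row Q i \<bullet> col Y j"
    by (rule scalar_prod_append[of _ r1 _ r2], insert P Q X Y i j, auto)
  finally show "(rowcat P Q * vst X Y) $$ (i,j) = (P * X + Q * Y) $$ (i,j)" using i j P Q X Y by simp
qed (insert P Q X Y, auto)

lemma adj_vst: assumes X: "X \<in> carrier_mat r1 m" and Y: "Y \<in> carrier_mat r2 m"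
  shows "mat_adjoint (vst X Y) = rowcat (mat_adjoint X) (mat_adjoint Y)"
  by (rule eq_matI, insert X Y, auto simp: rowcat_def vst_index)

lemma conjugate_append: "conjugate (v @\<^sub>v w) = conjugate v @\<^sub>v (conjugate w :: complex vec)"
  by (rule eq_vecI, auto)

lemma mult_mat_vec_neg: assumes "(A::complex mat) \<in> carrier_mat n m" "v \<in> carrier_vec m"
  shows "A *\<^sub>v (- v) = - (A *\<^sub>v v)"
  by (rule eq_vecI, insert assms, auto simp: scalar_prod_def sum_negf)

lemma append_zero_iff: assumes "v \<in> carrier_vec n1" "w \<in> carrier_vec n2"
  shows "v @\<^sub>v w = 0\<^sub>v (n1+n2) \<longleftrightarrow> v = 0\<^sub>v n1 \<and> w = 0\<^sub>v n2"
proof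
  assume h: "v @\<^sub>v w = 0\<^sub>v (n1+n2)"
  have "\<And>i. i < n1 \<Longrightarrow> v $ i = 0"
  proof -
    fix i assume i: "i < n1"
    have "(v @\<^sub>v w) $ i = 0" using h i by simp
    thus "v $ i = 0" using i assms by simp
  qed
  moreover have "\<And>i. i < n2 \<Longrightarrow> w $ i = 0"
  proof -
    fix i assume i: "i < n2"
    have "(v @\<^sub>v w) $ (n1 + i) = 0" using h i by simp
    thus "w $ i = 0" using i assms by simp
  qed
  ultimately show "v = 0\<^sub>v n1 \<and> w = 0\<^sub>v n2" using assms by (auto intro!: eq_vecI)
qed (use assms in auto)

lemma mat_vec_zero[simp]: "(A::complex mat) \<in> carrier_mat n m \<Longrightarrow> A *\<^sub>v 0\<^sub>v m = 0\<^sub>v n"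
  by (rule eq_vecI, auto)

lemma herm_congr: assumes P: "(P::complex mat) \<in> carrier_mat q q" and G: "G \<in> carrier_mat q m"
  and hP: "mat_adjoint P = P"
  shows "mat_adjoint (mat_adjoint G * P * G) = mat_adjoint G * P * G"
proof -
  have "mat_adjoint (mat_adjoint G * P * G) = mat_adjoint G * mat_adjoint (mat_adjoint G * P)"
    using adj_mult[OF mult_carrier_mat[OF adj_carrier[OF G] P] G] by simp
  also have "mat_adjoint (mat_adjoint G * P) = P * G"
    using adj_mult[OF adj_carrier[OF G] P] hP by simp
  finally show ?thesis using assoc_mult_mat[OF adj_carrier[OF G] P G] by simp
qed

lemma pd_block: assumes A: "A \<in> carrier_mat N N" and B: "B \<in> carrier_mat N q"
  and C: "C \<in> carrier_mat q N" and D: "D \<in> carrier_mat q q"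
  and pd: "pos_def (four_block_mat A B C D)"
  shows "pos_def A" "C = mat_adjoint B" "mat_adjoint D = D"
proof -
  let ?M = "four_block_mat A B C D"
  have M: "?M \<in> carrier_mat (N+q) (N+q)" using A D by simp
  have hM: "mat_adjoint ?M = ?M" using hermitianD[OF pd_herm[OF pd]] by simp
  have E: "\<And>i j. i < N+q \<Longrightarrow> j < N+q \<Longrightarrow> ?M $$ (i,j) = cnj (?M $$ (j,i))"
  proof -
    fix i j assume ij: "i < N+q" "j < N+q"
    have "?M $$ (i,j) = mat_adjoint ?M $$ (i,j)" using hM by simp
    moreover have "mat_adjoint ?M $$ (i,j) = cnj (?M $$ (j,i))" by (rule adj_index) (use ij M in auto)
    ultimately show "?M $$ (i,j) = cnj (?M $$ (j,i))" by simp
  qed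
  have hA: "mat_adjoint A = A"
  proof (rule eq_matI)
    fix i j assume "i < dim_row A" "j < dim_col A"
    hence ij: "i < N" "j < N" using A by auto
    show "mat_adjoint A $$ (i,j) = A $$ (i,j)" using E[of i j] ij A B C D by simp
  qed (use A in auto)
  show "C = mat_adjoint B"
  proof (rule eq_matI)
    fix i j assume "i < dim_row (mat_adjoint B)" "j < dim_col (mat_adjoint B)"
    hence ij: "i < q" "j < N" using B by auto
    show "C $$ (i,j) = mat_adjoint B $$ (i,j)" using E[of "N+i" j] ij A B C D by simp
  qed (use B C in auto)
  show "mat_adjoint D = D"
  proof (rule eq_matI)
    fix i j assume "i < dim_row D" "j < dim_col D"
    hence ij: "i < q" "j < q" using D by auto
    show "mat_adjoint D $$ (i,j) = D $$ (i,j)" using E[of "N+i" "N+j"] ij A B C D by simp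
  qed (use D in auto)
  show "pos_def A"
  proof (rule pd_intro[OF A hA])
    fix v :: "complex vec" assume v: "v \<in> carrier_vec N" "v \<noteq> 0\<^sub>v N"
    let ?y = "v @\<^sub>v 0\<^sub>v q"
    have y: "?y \<in> carrier_vec (N+q)" "?y \<noteq> 0\<^sub>v (N+q)" using v append_zero_iff[of v N "0\<^sub>v q" q] by auto
    have My: "?M *\<^sub>v ?y = (A *\<^sub>v v + B *\<^sub>v 0\<^sub>v q) @\<^sub>v (C *\<^sub>v v + D *\<^sub>v 0\<^sub>v q)"
      by (rule four_block_mat_mult_vec[OF A B C D v(1)], simp)
    have "conjugate ?y \<bullet> (?M *\<^sub>v ?y) = conjugate v \<bullet> (A *\<^sub>v v + B *\<^sub>v 0\<^sub>v q) + conjugate (0\<^sub>v q) \<bullet> (C *\<^sub>v v + D *\<^sub>v 0\<^sub>v q)"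
      unfolding My conjugate_append
      by (rule scalar_prod_append[of _ N _ q], insert v A B C D, auto)
    also have "\<dots> = conjugate v \<bullet> (A *\<^sub>v v)" using v A B C D by simp
    finally show "Im (conjugate v \<bullet> (A *\<^sub>v v)) = 0 \<and> Re (conjugate v \<bullet> (A *\<^sub>v v)) > 0"
      using pd_pos[OF pd, of ?y] y M by auto
  qed
qed




lemma vec_cancel1: assumes "(v::complex vec) \<in> carrier_vec n"
  shows "- v + v = 0\<^sub>v n" by (rule eq_vecI, insert assms, auto)

lemma pd_schur: assumes A: "A \<in> carrier_mat N N" and B: "B \<in> carrier_mat N q" and D: "D \<in> carrier_mat q q"
  and pd: "pos_def (four_block_mat A B (mat_adjoint B) D)"
  shows "pos_def (D - mat_adjoint B * minv A * B)"
proof -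
  let ?M = "four_block_mat A B (mat_adjoint B) D"
  have M: "?M \<in> carrier_mat (N+q) (N+q)" using A D by simp
  note bl = pd_block[OF A B adj_carrier[OF B] D pd]
  note Ai = pd_minv[OF bl(1) A]
  have hAi: "mat_adjoint (minv A) = minv A" by (rule pd_minv_adj[OF bl(1) A])
  let ?X = "mat_adjoint B * minv A * B"
  have X: "?X \<in> carrier_mat q q" using B Ai by auto
  let ?S = "D - ?X"
  have S: "?S \<in> carrier_mat q q" using minus_carrier_mat[OF X] .
  have hS: "mat_adjoint ?S = ?S"
    using adj_minus[OF D X] bl(3) herm_congr[OF Ai(1) B hAi] by simp
  show ?thesis
  proof (rule pd_intro[OF S hS])
    fix v :: "complex vec" assume v: "v \<in> carrier_vec q" "v \<noteq> 0\<^sub>v q"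
    define w where "w = (minv A * B) *\<^sub>v v"
    have w: "w \<in> carrier_vec N" using Ai B v unfolding w_def by auto
    let ?y = "(- w) @\<^sub>v v"
    have y: "?y \<in> carrier_vec (N+q)" "?y \<noteq> 0\<^sub>v (N+q)" using v w append_zero_iff[of "-w" N v q] by auto
    have Aw: "A *\<^sub>v w = B *\<^sub>v v"
    proof -
      have "A *\<^sub>v w = (A * (minv A * B)) *\<^sub>v v" unfolding w_def
        using assoc_mult_mat_vec[OF A mult_carrier_mat[OF Ai(1) B] v(1)] by simp
      also have "A * (minv A * B) = B" using assoc_mult_mat[OF A Ai(1) B, symmetric] Ai B by simp
      finally show ?thesis .
    qed
    have Xv: "?X *\<^sub>v v = mat_adjoint B *\<^sub>v w"
    proof -
      have "?X = mat_adjoint B * (minv A * B)" using assoc_mult_mat[OF adj_carrier[OF B] Ai(1) B] .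
      thus ?thesis unfolding w_def using assoc_mult_mat_vec[OF adj_carrier[OF B] mult_carrier_mat[OF Ai(1) B] v(1)] by simp
    qed
    have My: "?M *\<^sub>v ?y = (A *\<^sub>v (- w) + B *\<^sub>v v) @\<^sub>v (mat_adjoint B *\<^sub>v (- w) + D *\<^sub>v v)"
      by (rule four_block_mat_mult_vec[OF A B adj_carrier[OF B] D], insert w v, auto)
    have e1: "A *\<^sub>v (- w) + B *\<^sub>v v = 0\<^sub>v N"
      unfolding mult_mat_vec_neg[OF A w] Aw using vec_cancel1[of "B *\<^sub>v v" N] B v by auto
    have e2: "mat_adjoint B *\<^sub>v (- w) + D *\<^sub>v v = ?S *\<^sub>v v"
    proof -
      have "?S *\<^sub>v v = D *\<^sub>v v - mat_adjoint B *\<^sub>v w"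
        using minus_mult_distrib_mat_vec[OF D X v(1)] Xv by simp
      thus ?thesis unfolding mult_mat_vec_neg[OF adj_carrier[OF B] w]
        by (intro eq_vecI, insert D B v w, auto)
    qed
    have "conjugate ?y \<bullet> (?M *\<^sub>v ?y) = conjugate (- w) \<bullet> 0\<^sub>v N + conjugate v \<bullet> (?S *\<^sub>v v)"
      unfolding My conjugate_append e1 e2
      by (rule scalar_prod_append[of _ N _ q], insert v w S, auto)
    also have "\<dots> = conjugate v \<bullet> (?S *\<^sub>v v)" using w by simp
    finally show "Im (conjugate v \<bullet> (?S *\<^sub>v v)) = 0 \<and> Re (conjugate v \<bullet> (?S *\<^sub>v v)) > 0"
      using pd_pos[OF pd, of ?y] y M by auto
  qed
qed




lemma lin3: assumes "(P::complex mat) \<in> carrier_mat n m" "Q \<in> carrier_mat n m" "R \<in> carrier_mat n m"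
  "x \<in> carrier_mat n m" "g \<in> carrier_mat n m" and h1: "R - Q = g" and h2: "g = x - P"
  shows "P - Q + R = x"
proof (rule eq_matI)
  fix i j assume "i < dim_row x" "j < dim_col x"
  hence ij: "i < n" "j < m" using assms by auto
  have e1: "R $$ (i,j) - Q $$ (i,j) = g $$ (i,j)" using arg_cong[OF h1, of "\<lambda>M. M $$ (i,j)"] ij assms(1-5) by simp
  have e2: "g $$ (i,j) = x $$ (i,j) - P $$ (i,j)" using arg_cong[OF h2, of "\<lambda>M. M $$ (i,j)"] ij assms(1-5) by simp
  have "P $$ (i,j) - Q $$ (i,j) + R $$ (i,j) = P $$ (i,j) + (R $$ (i,j) - Q $$ (i,j))" by simp
  also have "\<dots> = P $$ (i,j) + (x $$ (i,j) - P $$ (i,j))" using e1 e2 by simp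
  also have "\<dots> = x $$ (i,j)" by simp
  finally have "P $$ (i,j) - Q $$ (i,j) + R $$ (i,j) = x $$ (i,j)" .
  thus "(P - Q + R) $$ (i,j) = x $$ (i,j)" using ij assms(1-5) by simp
qed (use assms in auto)

lemma lin_a: assumes "(X::complex mat) \<in> carrier_mat n m" "W \<in> carrier_mat n m"
  shows "X - W + W = X"
  by (rule eq_matI, insert assms, auto)

lemma lin_c: assumes "(P::complex mat) \<in> carrier_mat n m" "Q \<in> carrier_mat n m" "R \<in> carrier_mat n m"
  shows "P - Q + R = P + (R - Q)"
  by (rule eq_matI, insert assms, auto)

lemma inv_cancel: assumes "(A::complex mat) \<in> carrier_mat n n" "Ai \<in> carrier_mat n n" "A * Ai = 1\<^sub>m n" "W \<in> carrier_mat n k"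
  shows "A * (Ai * W) = W"
  using assoc_mult_mat[OF assms(1,2,4), symmetric] assms left_mult_one_mat[OF assms(4)] by simp

lemma schur_quad:
  assumes A: "A \<in> carrier_mat N N" and B: "B \<in> carrier_mat N q" and D: "D \<in> carrier_mat q q"
  and pd: "pos_def (four_block_mat A B (mat_adjoint B) D)"
  and x1: "x1 \<in> carrier_mat N m" and x2: "x2 \<in> carrier_mat q m"
  shows "mat_adjoint (vst x1 x2) * minv (four_block_mat A B (mat_adjoint B) D) * vst x1 x2
        = mat_adjoint x1 * minv A * x1
          + mat_adjoint (x2 - mat_adjoint B * minv A * x1) * minv (D - mat_adjoint B * minv A * B)
            * (x2 - mat_adjoint B * minv A * x1)"
proof -
  define M where "M = four_block_mat A B (mat_adjoint B) D"
  have M: "M \<in> carrier_mat (N+q) (N+q)" using A D unfolding M_def by simp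
  note Mi = pd_minv[OF pd[folded M_def] M]
  note bl = pd_block[OF A B adj_carrier[OF B] D pd]
  define Ai where "Ai = minv A"
  note Ai = pd_minv[OF bl(1) A, folded Ai_def]
  have hAi: "mat_adjoint Ai = Ai" unfolding Ai_def by (rule pd_minv_adj[OF bl(1) A])
  define S where "S = D - mat_adjoint B * minv A * B"
  have pdS: "pos_def S" unfolding S_def by (rule pd_schur[OF A B D pd])
  have S: "S \<in> carrier_mat q q" unfolding S_def Ai_def[symmetric]
    by (rule minus_carrier_mat, insert B Ai, auto)
  define Si where "Si = minv S"
  note Si = pd_minv[OF pdS S, folded Si_def]
  define g where "g = x2 - mat_adjoint B * minv A * x1"
  have Bt: "mat_adjoint B \<in> carrier_mat q N" using B by auto
  have g: "g \<in> carrier_mat q m" unfolding g_def Ai_def[symmetric]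
    by (rule minus_carrier_mat, insert B Ai x1, auto)
  define Z where "Z = Si * g"
  have Z: "Z \<in> carrier_mat q m" unfolding Z_def using Si g by auto
  define y1 where "y1 = Ai * x1 - Ai * (B * Z)"
  have BZ: "B * Z \<in> carrier_mat N m" using B Z by auto
  have y1: "y1 \<in> carrier_mat N m" unfolding y1_def by (rule minus_carrier_mat, insert Ai BZ, auto)
  have a1: "A * y1 = x1 - B * Z"
    unfolding y1_def mult_minus_distrib_mat[OF A mult_carrier_mat[OF Ai(1) x1] mult_carrier_mat[OF Ai(1) BZ]]
      inv_cancel[OF A Ai(1) Ai(2) x1] inv_cancel[OF A Ai(1) Ai(2) BZ] ..
  have a: "A * y1 + B * Z = x1" unfolding a1 by (rule lin_a[OF x1 BZ])
  have AiBZ: "Ai * (B * Z) \<in> carrier_mat N m" using Ai BZ by auto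
  have Aix1: "Ai * x1 \<in> carrier_mat N m" using Ai x1 by auto
  have b1: "mat_adjoint B * y1 = mat_adjoint B * (Ai * x1) - mat_adjoint B * (Ai * (B * Z))"
    unfolding y1_def by (rule mult_minus_distrib_mat[OF Bt Aix1 AiBZ])
  have SZ: "S * Z = g" unfolding Z_def by (rule inv_cancel[OF S Si(1) Si(2) g])
  have SZ2: "S * Z = D * Z - mat_adjoint B * (Ai * (B * Z))"
  proof -
    have "S * Z = D * Z - (mat_adjoint B * Ai * B) * Z" unfolding S_def Ai_def[symmetric]
      by (rule minus_mult_distrib_mat[OF D _ Z], insert Bt Ai B, auto)
    also have "(mat_adjoint B * Ai * B) * Z = mat_adjoint B * (Ai * (B * Z))"
      using assoc_mult_mat[OF mult_carrier_mat[OF Bt Ai(1)] B Z] assoc_mult_mat[OF Bt Ai(1) BZ] by simp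
    finally show ?thesis .
  qed
  have g2: "g = x2 - mat_adjoint B * (Ai * x1)" unfolding g_def Ai_def[symmetric] using Bt Ai x1 by simp
  have b: "mat_adjoint B * y1 + D * Z = x2" unfolding b1
    by (rule lin3[OF _ _ _ x2 g _ g2], insert Bt Aix1 AiBZ D Z SZ SZ2, auto)
  have My: "M * vst y1 Z = vst x1 x2"
    unfolding M_def mult_4b_vst[OF A B Bt D y1 Z] a b ..
  have Miv: "minv M * vst x1 x2 = vst y1 Z"
    unfolding My[symmetric] using inv_cancel[OF Mi(1) M Mi(3) vst_carrier[OF y1 Z]] by simp
  have LHS: "mat_adjoint (vst x1 x2) * minv M * vst x1 x2 = mat_adjoint x1 * y1 + mat_adjoint x2 * Z"
  proof -
    have "mat_adjoint (vst x1 x2) * minv M * vst x1 x2 = mat_adjoint (vst x1 x2) * (minv M * vst x1 x2)"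
      by (rule assoc_mult_mat[OF adj_carrier[OF vst_carrier[OF x1 x2]] Mi(1) vst_carrier[OF x1 x2]])
    also have "\<dots> = rowcat (mat_adjoint x1) (mat_adjoint x2) * vst y1 Z" unfolding Miv adj_vst[OF x1 x2] ..
    also have "\<dots> = mat_adjoint x1 * y1 + mat_adjoint x2 * Z"
      by (rule rowcat_vst[OF adj_carrier[OF x1] adj_carrier[OF x2] y1 Z])
    finally show ?thesis .
  qed
  have x1t: "mat_adjoint x1 \<in> carrier_mat m N" using x1 by auto
  have x2t: "mat_adjoint x2 \<in> carrier_mat m q" using x2 by auto
  have adjg: "mat_adjoint g = mat_adjoint x2 - mat_adjoint x1 * (Ai * B)"
  proof -
    have "mat_adjoint g = mat_adjoint x2 - mat_adjoint (mat_adjoint B * (Ai * x1))"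
      using adj_minus[OF x2 mult_carrier_mat[OF Bt Aix1]] g2 by simp
    also have "mat_adjoint (mat_adjoint B * (Ai * x1)) = mat_adjoint (Ai * x1) * B"
      using adj_mult[OF Bt Aix1] by simp
    also have "mat_adjoint (Ai * x1) = mat_adjoint x1 * Ai"
      using adj_mult[OF Ai(1) x1] hAi by simp
    also have "mat_adjoint x1 * Ai * B = mat_adjoint x1 * (Ai * B)"
      using x1t Ai B by simp
    finally show ?thesis .
  qed
  have RHS2: "mat_adjoint g * Si * g = mat_adjoint x2 * Z - mat_adjoint x1 * (Ai * (B * Z))"
  proof -
    have "mat_adjoint g * Si * g = mat_adjoint g * Z" unfolding Z_def
      using assoc_mult_mat[OF adj_carrier[OF g] Si(1) g] .
    also have "\<dots> = mat_adjoint x2 * Z - (mat_adjoint x1 * (Ai * B)) * Z"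
      unfolding adjg by (rule minus_mult_distrib_mat[OF x2t _ Z], insert x1t Ai B, auto)
    also have "(mat_adjoint x1 * (Ai * B)) * Z = mat_adjoint x1 * (Ai * (B * Z))"
      using assoc_mult_mat[OF x1t mult_carrier_mat[OF Ai(1) B] Z] assoc_mult_mat[OF Ai(1) B Z] by simp
    finally show ?thesis .
  qed
  have "mat_adjoint x1 * y1 + mat_adjoint x2 * Z
      = mat_adjoint x1 * (Ai * x1) - mat_adjoint x1 * (Ai * (B * Z)) + mat_adjoint x2 * Z"
    unfolding y1_def by (simp only: mult_minus_distrib_mat[OF x1t Aix1 AiBZ])
  also have "\<dots> = mat_adjoint x1 * (Ai * x1) + (mat_adjoint x2 * Z - mat_adjoint x1 * (Ai * (B * Z)))"
    by (rule lin_c, insert x1t Aix1 AiBZ x2t Z, auto)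
  also have "\<dots> = mat_adjoint x1 * Ai * x1 + mat_adjoint g * Si * g"
    unfolding RHS2 using assoc_mult_mat[OF x1t Ai(1) x1] by simp
  finally show ?thesis using LHS unfolding M_def Ai_def Si_def S_def g_def by simp
qed




definition cc :: "real \<Rightarrow> (nat \<Rightarrow> complex mat) \<Rightarrow> nat \<Rightarrow> complex mat" where
  "cc b s i = complex_of_real b \<cdot>\<^sub>m s i - s (i+1)"
definition dd :: "real \<Rightarrow> (nat \<Rightarrow> complex mat) \<Rightarrow> nat \<Rightarrow> complex mat" where
  "dd b s i = s (i+1) - complex_of_real b \<cdot>\<^sub>m s i"
definition bcol :: "nat \<Rightarrow> nat \<Rightarrow> (nat \<Rightarrow> complex mat) \<Rightarrow> complex mat" where
  "bcol q r g = blockmat q r 1 (\<lambda>l k. g l)"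
definition Wc :: "nat \<Rightarrow> real \<Rightarrow> nat \<Rightarrow> complex mat" where
  "Wc q a j = bcol q (j+1) (\<lambda>l. complex_of_real a ^ l \<cdot>\<^sub>m 1\<^sub>m q)"

lemma bcol_carrier[simp]: "bcol q r g \<in> carrier_mat (r*q) q"
  unfolding bcol_def blockmat_def by auto

lemma bcol_dims[simp]: "dim_row (bcol q r g) = r*q" "dim_col (bcol q r g) = q"
  unfolding bcol_def blockmat_def by auto

lemma hankel_carrier[simp]: "hankel q f j \<in> carrier_mat ((j+1)*q) ((j+1)*q)"
  unfolding hankel_def blockmat_def by auto

lemma blockmat_dims[simp]: "dim_row (blockmat q r c F) = r*q" "dim_col (blockmat q r c F) = c*q"
  unfolding blockmat_def by auto

lemma blockmat_index: "i < r*q \<Longrightarrow> k < c*q \<Longrightarrow>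
  blockmat q r c F $$ (i,k) = F (i div q) (k div q) $$ (i mod q, k mod q)"
  unfolding blockmat_def by auto

lemma blk: assumes "j*q \<le> (i::nat)" "i < (j+1)*q" shows "i div q = j" "i mod q = i - j*q"
proof -
  have q: "q > 0" using assms by (cases q) auto
  define r where "r = i - j*q"
  have i: "i = r + j*q" and r: "r < q" using assms unfolding r_def by auto
  show "i div q = j" unfolding i using q r by simp
  show "i mod q = i - j*q" unfolding i using q r by simp
qed

lemma blk0: assumes "(i::nat) < q" shows "i div q = 0" "i mod q = i"
  using assms by auto

lemma herm_ent: assumes "(A::complex mat) \<in> carrier_mat q q" "mat_adjoint A = A" "x < q" "y < q"
  shows "cnj (A $$ (x,y)) = A $$ (y,x)"
proof -
  have "A $$ (y,x) = mat_adjoint A $$ (y,x)" using assms by simp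
  also have "\<dots> = cnj (A $$ (x,y))" by (rule adj_index, insert assms, auto)
  finally show ?thesis by simp
qed

lemma hankel_split: assumes q: "q \<ge> 1" and j: "j \<ge> 1"
  and f: "\<And>i. i \<le> 2*j \<Longrightarrow> f i \<in> carrier_mat q q \<and> mat_adjoint (f i) = f i"
  shows "hankel q f j = four_block_mat (hankel q f (j-1)) (bcol q j (\<lambda>l. f (j+l)))
            (mat_adjoint (bcol q j (\<lambda>l. f (j+l)))) (f (2*j))"
proof -
  have jj: "j - 1 + 1 = j" using j by simp
  have fc: "f (2*j) \<in> carrier_mat q q" using f by simp
  show ?thesis
  proof (rule eq_matI)
    fix i k assume "i < dim_row (four_block_mat (hankel q f (j-1)) (bcol q j (\<lambda>l. f (j+l)))
            (mat_adjoint (bcol q j (\<lambda>l. f (j+l)))) (f (2*j)))"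
      "k < dim_col (four_block_mat (hankel q f (j-1)) (bcol q j (\<lambda>l. f (j+l)))
            (mat_adjoint (bcol q j (\<lambda>l. f (j+l)))) (f (2*j)))"
    hence i: "i < (j+1)*q" and k: "k < (j+1)*q" using fc unfolding hankel_def jj by auto
    have L: "hankel q f j $$ (i,k) = f (i div q + k div q) $$ (i mod q, k mod q)"
      unfolding hankel_def using i k by (simp add: blockmat_index)
    have q0: "q > 0" using q by simp
    show "hankel q f j $$ (i,k) = four_block_mat (hankel q f (j-1)) (bcol q j (\<lambda>l. f (j+l)))
            (mat_adjoint (bcol q j (\<lambda>l. f (j+l)))) (f (2*j)) $$ (i,k)"
    proof (cases "i < j*q")
      case iT: True
      show ?thesis
      proof (cases "k < j*q")
        case True
        thus ?thesis using iT i k fc L unfolding hankel_def jj by (simp add: blockmat_index)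
      next
        case False
        note kd = blk[OF _ k, of] 
        have kd1: "k div q = j" "k mod q = k - j*q" using blk[of j q k] False k by auto
        have km: "k - j*q < q" using False k by auto
        have "four_block_mat (hankel q f (j-1)) (bcol q j (\<lambda>l. f (j+l)))
            (mat_adjoint (bcol q j (\<lambda>l. f (j+l)))) (f (2*j)) $$ (i,k)
            = bcol q j (\<lambda>l. f (j+l)) $$ (i, k - j*q)"
          using iT False i k fc unfolding hankel_def jj by simp
        also have "\<dots> = f (j + i div q) $$ (i mod q, k - j*q)"
          unfolding bcol_def using iT km by (simp add: blockmat_index)
        finally show ?thesis using L kd1 by (simp add: add.commute)
      qed
    next
      case iF: False
      have id1: "i div q = j" "i mod q = i - j*q" using blk[of j q i] iF i by auto
      have im: "i - j*q < q" using iF i by auto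
      show ?thesis
      proof (cases "k < j*q")
        case True
        have kq: "k div q < j" using True by (simp add: less_mult_imp_div_less)
        have kmq: "k mod q < q" using q0 by simp
        have "four_block_mat (hankel q f (j-1)) (bcol q j (\<lambda>l. f (j+l)))
            (mat_adjoint (bcol q j (\<lambda>l. f (j+l)))) (f (2*j)) $$ (i,k)
            = mat_adjoint (bcol q j (\<lambda>l. f (j+l))) $$ (i - j*q, k)"
          using iF True i k fc unfolding hankel_def jj by simp
        also have "\<dots> = cnj (bcol q j (\<lambda>l. f (j+l)) $$ (k, i - j*q))"
          by (rule adj_index, insert True im, auto)
        also have "\<dots> = cnj (f (j + k div q) $$ (k mod q, i - j*q))"
          unfolding bcol_def using True im by (simp add: blockmat_index)
        also have "\<dots> = f (j + k div q) $$ (i - j*q, k mod q)"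
          by (rule herm_ent, insert f[of "j + k div q"] kq im kmq, auto)
        finally show ?thesis using L id1 by (simp add: add.commute)
      next
        case False
        have kd1: "k div q = j" "k mod q = k - j*q" using blk[of j q k] False k by auto
        have "four_block_mat (hankel q f (j-1)) (bcol q j (\<lambda>l. f (j+l)))
            (mat_adjoint (bcol q j (\<lambda>l. f (j+l)))) (f (2*j)) $$ (i,k)
            = f (2*j) $$ (i - j*q, k - j*q)"
          using iF False i k fc unfolding hankel_def jj by simp
        thus ?thesis using L id1 kd1 by (simp add: mult_2)
      qed
    qed
  qed (use fc j in \<open>auto simp: hankel_def\<close>)
qed

lemma bcol_split: assumes "g j \<in> carrier_mat q q"
  shows "bcol q (j+1) g = vst (bcol q j g) (g j)"
proof (rule eq_matI)
  fix i k assume "i < dim_row (vst (bcol q j g) (g j))" "k < dim_col (vst (bcol q j g) (g j))"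
  hence i: "i < (j+1)*q" and k: "k < q" using assms by auto
  show "bcol q (j+1) g $$ (i,k) = vst (bcol q j g) (g j) $$ (i,k)"
  proof (cases "i < j*q")
    case True thus ?thesis using i k assms unfolding bcol_def by (simp add: vst_index blockmat_index)
  next
    case False
    have id1: "i div q = j" "i mod q = i - j*q" using blk[of j q i] False i by auto
    thus ?thesis using False i k assms unfolding bcol_def by (simp add: vst_index blockmat_index)
  qed
qed (use assms in auto)

lemma bcol1: assumes "g 0 \<in> carrier_mat q q" shows "bcol q 1 g = g 0"
  by (rule eq_matI, insert assms, auto simp: bcol_def blockmat_index)

lemma hankel0: assumes "f 0 \<in> carrier_mat q q" shows "hankel q f 0 = f 0"
  by (rule eq_matI, insert assms, auto simp: hankel_def blockmat_index)

locale dsm =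
  fixes q n :: nat and a b :: real and s :: "nat \<Rightarrow> complex mat"
  assumes q: "q \<ge> 1" and n: "n \<ge> 1" and ab: "a < b"
    and sj: "\<And>j. j \<le> 2*n+1 \<Longrightarrow> s j \<in> carrier_mat q q \<and> hermitian (s j)"
    and pH2: "pos_def (H2 q a b s (n-1))"
    and pK1: "pos_def (K1 q b s n)"

context dsm
begin

lemma s_car: "j \<le> 2*n+1 \<Longrightarrow> s j \<in> carrier_mat q q" using sj by auto
lemma s_adj: "j \<le> 2*n+1 \<Longrightarrow> mat_adjoint (s j) = s j" using sj hermitianD by blast

lemma s_ent: "k \<le> 2*n+1 \<Longrightarrow> x < q \<Longrightarrow> y < q \<Longrightarrow> cnj (s k $$ (y,x)) = s k $$ (x,y)"
  using herm_ent[OF s_car s_adj] by blast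

lemma shat_herm: assumes "i \<le> 2*n-1"
  shows "shat a b s i \<in> carrier_mat q q \<and> mat_adjoint (shat a b s i) = shat a b s i"
proof -
  have i2: "i+2 \<le> 2*n+1" using assms n by simp
  have c: "s i \<in> carrier_mat q q" "s (i+1) \<in> carrier_mat q q" "s (i+2) \<in> carrier_mat q q"
    using s_car assms i2 by auto
  have C: "shat a b s i \<in> carrier_mat q q" unfolding shat_def using c by auto
  have "mat_adjoint (shat a b s i) = shat a b s i"
  proof (rule eq_matI)
    fix x y assume "x < dim_row (shat a b s i)" "y < dim_col (shat a b s i)"
    hence xy: "x < q" "y < q" using C by auto
    have "mat_adjoint (shat a b s i) $$ (x,y) = cnj (shat a b s i $$ (y,x))"
      by (rule adj_index, insert C xy, auto)
    also have "\<dots> = shat a b s i $$ (x,y)"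
      unfolding shat_def using c xy s_ent[of i x y] s_ent[of "i+1" x y] s_ent[of "i+2" x y] assms i2 by simp
    finally show "mat_adjoint (shat a b s i) $$ (x,y) = shat a b s i $$ (x,y)" .
  qed (use C in auto)
  thus ?thesis using C by simp
qed

lemma cc_herm: assumes "i \<le> 2*n"
  shows "cc b s i \<in> carrier_mat q q \<and> mat_adjoint (cc b s i) = cc b s i"
proof -
  have c: "s i \<in> carrier_mat q q" "s (i+1) \<in> carrier_mat q q"
    using s_car assms by auto
  have C: "cc b s i \<in> carrier_mat q q" unfolding cc_def using c by auto
  have "mat_adjoint (cc b s i) = cc b s i"
  proof (rule eq_matI)
    fix x y assume "x < dim_row (cc b s i)" "y < dim_col (cc b s i)"
    hence xy: "x < q" "y < q" using C by auto
    have "mat_adjoint (cc b s i) $$ (x,y) = cnj (cc b s i $$ (y,x))"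
      by (rule adj_index, insert C xy, auto)
    also have "\<dots> = cc b s i $$ (x,y)"
      unfolding cc_def using c xy s_ent[of i x y] s_ent[of "i+1" x y] assms by simp
    finally show "mat_adjoint (cc b s i) $$ (x,y) = cc b s i $$ (x,y)" .
  qed (use C in auto)
  thus ?thesis using C by simp
qed

lemma dd_car: "i \<le> 2*n \<Longrightarrow> dd b s i \<in> carrier_mat q q"
  unfolding dd_def using s_car[of i] s_car[of "i+1"] by auto

lemma K1_cc: "K1 q b s j = hankel q (cc b s) j"
  unfolding K1_def cc_def ..
lemma Yt1_cc: "Yt1 q b s j = bcol q j (\<lambda>l. cc b s (j+l))"
  unfolding Yt1_def cc_def bcol_def by simp
lemma Y2_bcol: "Y2 q a b s j = bcol q j (\<lambda>l. shat a b s (j+l))"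
  unfolding Y2_def bcol_def ..

lemma H2_split: assumes j: "1 \<le> j" "j \<le> n-1"
  shows "H2 q a b s j = four_block_mat (H2 q a b s (j-1)) (Y2 q a b s j) (mat_adjoint (Y2 q a b s j)) (shat a b s (2*j))"
  unfolding H2_def Y2_bcol by (rule hankel_split[OF q j(1)], use shat_herm j in auto)

lemma K1_split: assumes j: "1 \<le> j" "j \<le> n"
  shows "K1 q b s j = four_block_mat (K1 q b s (j-1)) (Yt1 q b s j) (mat_adjoint (Yt1 q b s j)) (cc b s (2*j))"
  unfolding K1_cc Yt1_cc by (rule hankel_split[OF q j(1)], use cc_herm j in auto)

lemma pd_H2_aux: "d \<le> n-1 \<Longrightarrow> pos_def (H2 q a b s (n-1-d))"
proof (induction d)
  case 0 thus ?case using pH2 by simp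
next
  case (Suc d)
  define J where "J = n-1-d"
  have J: "1 \<le> J" "J \<le> n-1" using Suc.prems unfolding J_def by auto
  have JJ: "J - 1 + 1 = J" using J by simp
  have e: "n - 1 - Suc d = J - 1" unfolding J_def by simp
  have pd: "pos_def (H2 q a b s J)" using Suc unfolding J_def by simp
  have A: "H2 q a b s (J-1) \<in> carrier_mat (J*q) (J*q)"
    using hankel_carrier[of q "shat a b s" "J-1"] unfolding H2_def JJ .
  have B: "Y2 q a b s J \<in> carrier_mat (J*q) q" unfolding Y2_bcol by simp
  have D: "shat a b s (2*J) \<in> carrier_mat q q" using shat_herm[of "2*J"] J by simp
  show ?case unfolding e
    by (rule pd_block(1)[OF A B adj_carrier[OF B] D], insert pd H2_split[OF J], simp)
qed

lemma pd_H2: assumes "j \<le> n-1" shows "pos_def (H2 q a b s j)"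
proof -
  have "n - 1 - (n - 1 - j) = j" using assms by simp
  thus ?thesis using pd_H2_aux[of "n-1-j"] by simp
qed

lemma pd_K1_aux: "d \<le> n \<Longrightarrow> pos_def (K1 q b s (n-d))"
proof (induction d)
  case 0 thus ?case using pK1 by simp
next
  case (Suc d)
  define J where "J = n-d"
  have J: "1 \<le> J" "J \<le> n" using Suc.prems unfolding J_def by auto
  have JJ: "J - 1 + 1 = J" using J by simp
  have e: "n - Suc d = J - 1" unfolding J_def by simp
  have pd: "pos_def (K1 q b s J)" using Suc unfolding J_def by simp
  have A: "K1 q b s (J-1) \<in> carrier_mat (J*q) (J*q)"
    using hankel_carrier[of q _ "J-1"] unfolding K1_def JJ .
  have B: "Yt1 q b s J \<in> carrier_mat (J*q) q" unfolding Yt1_cc by simp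
  have D: "cc b s (2*J) \<in> carrier_mat q q" using cc_herm[of "2*J"] J by simp
  show ?case unfolding e
    by (rule pd_block(1)[OF A B adj_carrier[OF B] D], insert pd K1_split[OF J], simp)
qed

lemma pd_K1: assumes "j \<le> n" shows "pos_def (K1 q b s j)"
proof -
  have "n - (n - j) = j" using assms by simp
  thus ?thesis using pd_K1_aux[of "n-j"] by simp
qed

end




definition Lm :: "nat \<Rightarrow> nat \<Rightarrow> complex \<Rightarrow> complex mat" where
  "Lm q j z = 1\<^sub>m ((j+1)*q) - z \<cdot>\<^sub>m Tm q j"

lemma Lm_car[simp]: "Lm q j z \<in> carrier_mat ((j+1)*q) ((j+1)*q)"
  unfolding Lm_def Tm_def by (auto simp: minus_carrier_mat)

lemma Lm_dims[simp]: "dim_row (Lm q j z) = (j+1)*q" "dim_col (Lm q j z) = (j+1)*q"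
  using Lm_car[of q j z] by auto

lemma divmod_shift: assumes "(q::nat) > 0"
  shows "(i div q = k div q + 1 \<and> i mod q = k mod q) = (i = k + q)"
proof
  assume h: "i div q = k div q + 1 \<and> i mod q = k mod q"
  have "i = (i div q) * q + i mod q" by simp
  also have "\<dots> = (k div q) * q + k mod q + q" using h by (simp add: algebra_simps)
  also have "\<dots> = k + q" by simp
  finally show "i = k + q" .
next
  assume "i = k + q" thus "i div q = k div q + 1 \<and> i mod q = k mod q" using assms by simp
qed

lemma Tm_idx: assumes "q > 0" "i < (j+1)*q" "k < (j+1)*q"
  shows "Tm q j $$ (i,k) = (if i = k + q then 1 else 0)"
proof -
  have m: "i mod q < q" "k mod q < q" using assms by auto
  have "Tm q j $$ (i,k) = (if i div q = k div q + 1 then 1\<^sub>m q $$ (i mod q, k mod q) else 0\<^sub>m q q $$ (i mod q, k mod q))"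
    unfolding Tm_def using assms by (simp add: blockmat_index)
  also have "\<dots> = (if i div q = k div q + 1 \<and> i mod q = k mod q then 1 else 0)" using m by auto
  also have "\<dots> = (if i = k + q then 1 else 0)" using divmod_shift[OF assms(1)] by simp
  finally show ?thesis .
qed

lemma Tm_dims[simp]: "dim_row (Tm q j) = (j+1)*q" "dim_col (Tm q j) = (j+1)*q"
  unfolding Tm_def by auto

lemma Lm_idx: assumes "q > 0" "i < (j+1)*q" "k < (j+1)*q"
  shows "Lm q j z $$ (i,k) = (if k = i then 1 else 0) - z * (if i = k + q then 1 else 0)"
proof -
  have "Lm q j z $$ (i,k) = 1\<^sub>m ((j+1)*q) $$ (i,k) - z * Tm q j $$ (i,k)"
    unfolding Lm_def using assms by simp
  thus ?thesis using Tm_idx[OF assms] assms by auto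
qed

lemma sum_shift_delta: assumes "(i::nat) < N"
  shows "(\<Sum>k<N. (if i = k + q then f k else 0)) = (if q \<le> i then f (i - q) else (0::complex))"
proof (cases "q \<le> i")
  case True
  have "(\<Sum>k<N. (if i = k + q then f k else 0)) = (\<Sum>k<N. (if k = i - q then f k else 0))"
    by (rule sum.cong, insert True, auto)
  also have "\<dots> = f (i - q)" using assms True by (simp add: sum.delta)
  finally show ?thesis using True by simp
next
  case False
  have "(\<Sum>k<N. (if i = k + q then f k else 0)) = (\<Sum>k<N. (0::complex))"
    by (rule sum.cong, insert False, auto)
  thus ?thesis using False by simp
qed

lemma Lm_mult: assumes q: "q > 0" and X: "X \<in> carrier_mat ((j+1)*q) m" and i: "i < (j+1)*q" and c: "c < m"
  shows "(Lm q j z * X) $$ (i,c) = X $$ (i,c) - z * (if q \<le> i then X $$ (i-q,c) else 0)"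
proof -
  let ?N = "(j+1)*q"
  have "(Lm q j z * X) $$ (i,c) = (\<Sum>k<?N. Lm q j z $$ (i,k) * X $$ (k,c))"
    using X i c by (auto simp: scalar_prod_def lessThan_atLeast0 intro!: sum.cong)
  also have "\<dots> = (\<Sum>k<?N. (if k = i then X $$ (k,c) else 0) - z * (if i = k + q then X $$ (k,c) else 0))"
    by (rule sum.cong, insert i q, auto simp: Lm_idx)
  also have "\<dots> = X $$ (i,c) - z * (if q \<le> i then X $$ (i-q,c) else 0)"
    using i by (simp add: sum_subtractf sum_distrib_left[symmetric] sum_shift_delta sum.delta)
  finally show ?thesis .
qed

lemma Lm_vec: assumes q: "q > 0" and v: "v \<in> carrier_vec ((j+1)*q)" and i: "i < (j+1)*q"
  shows "(Lm q j z *\<^sub>v v) $ i = v $ i - z * (if q \<le> i then v $ (i-q) else 0)"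
proof -
  let ?N = "(j+1)*q"
  have "(Lm q j z *\<^sub>v v) $ i = (\<Sum>k<?N. Lm q j z $$ (i,k) * v $ k)"
    using v i by (auto simp: scalar_prod_def lessThan_atLeast0 intro!: sum.cong)
  also have "\<dots> = (\<Sum>k<?N. (if k = i then v $ k else 0) - z * (if i = k + q then v $ k else 0))"
    by (rule sum.cong, insert i q, auto simp: Lm_idx)
  also have "\<dots> = v $ i - z * (if q \<le> i then v $ (i-q) else 0)"
    using i by (simp add: sum_subtractf sum_distrib_left[symmetric] sum_shift_delta sum.delta)
  finally show ?thesis .
qed

lemma Lm_inj: assumes q: "q > 0" and v: "v \<in> carrier_vec ((j+1)*q)" and h: "Lm q j z *\<^sub>v v = 0\<^sub>v ((j+1)*q)"
  shows "v = 0\<^sub>v ((j+1)*q)"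
proof -
  have "\<forall>i. i < (j+1)*q \<longrightarrow> v $ i = 0"
  proof (rule allI, induct_tac i rule: less_induct, rule impI)
    fix i assume IH: "\<And>y. y < i \<Longrightarrow> y < (j+1)*q \<longrightarrow> v $ y = 0" and i: "i < (j+1)*q"
    have "(Lm q j z *\<^sub>v v) $ i = 0" using h i by simp
    hence e: "v $ i = z * (if q \<le> i then v $ (i-q) else 0)" using Lm_vec[OF q v i] by simp
    show "v $ i = 0"
    proof (cases "q \<le> i")
      case True
      have "v $ (i - q) = 0" using IH[of "i-q"] True q i by auto
      thus ?thesis using e by simp
    qed (use e in simp)
  qed
  thus ?thesis using v by (auto intro!: eq_vecI)
qed

lemma Rm_props: assumes q: "q > 0"
  shows "Rm q j z \<in> carrier_mat ((j+1)*q) ((j+1)*q)" "Lm q j z * Rm q j z = 1\<^sub>m ((j+1)*q)"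
    "Rm q j z * Lm q j z = 1\<^sub>m ((j+1)*q)"
  using minv_props[OF Lm_car Lm_inj[OF q]] unfolding Rm_def Lm_def[symmetric] by auto

lemma Rm_apply: assumes q: "q > 0" and X: "X \<in> carrier_mat ((j+1)*q) m"
  shows "Rm q j z * (Lm q j z * X) = X"
  using inv_cancel[OF Rm_props(1)[OF q] Lm_car Rm_props(3)[OF q] X] .

context dsm
begin

lemma R_car: "Rm q j (complex_of_real a) \<in> carrier_mat ((j+1)*q) ((j+1)*q)"
  using Rm_props q by simp

lemma q0: "q > 0" using q by simp

lemma R_v: assumes "j \<le> n" shows "Rm q j (complex_of_real a) * vv q j = Wc q a j"
proof -
  have W: "Wc q a j \<in> carrier_mat ((j+1)*q) q" unfolding Wc_def by (rule bcol_carrier)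
  have "Lm q j (complex_of_real a) * Wc q a j = vv q j"
  proof (rule eq_matI)
    fix i c assume "i < dim_row (vv q j)" "c < dim_col (vv q j)"
    hence i: "i < (j+1)*q" and c: "c < q" unfolding vv_def by auto
    have Widx: "\<And>i. i < (j+1)*q \<Longrightarrow> Wc q a j $$ (i,c) = complex_of_real a ^ (i div q) * (if i mod q = c then 1 else 0)"
      unfolding Wc_def bcol_def using c q0 by (simp add: blockmat_index)
    have L: "(Lm q j (complex_of_real a) * Wc q a j) $$ (i,c) = Wc q a j $$ (i,c) - complex_of_real a * (if q \<le> i then Wc q a j $$ (i-q,c) else 0)"
      by (rule Lm_mult[OF q0 W i c])
    show "(Lm q j (complex_of_real a) * Wc q a j) $$ (i,c) = vv q j $$ (i,c)"
    proof (cases "q \<le> i")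
      case False
      have "vv q j $$ (i,c) = (if i = c then 1 else 0)" unfolding vv_def using False i c by (simp add: blockmat_index)
      thus ?thesis unfolding L using False Widx[OF i] by simp
    next
      case True
      then obtain m where m: "i = m + q" by (metis le_add_diff_inverse2)
      have mi: "m < (j+1)*q" using m i by simp
      have "vv q j $$ (i,c) = 0" unfolding vv_def using m i c q0 by (simp add: blockmat_index)
      moreover have "Wc q a j $$ (i,c) = complex_of_real a * Wc q a j $$ (i-q,c)"
        using Widx[OF i] Widx[OF mi] m q0 by simp
      ultimately show ?thesis unfolding L using True by simp
    qed
  qed (use W in \<open>auto simp: vv_def\<close>)
  hence "Rm q j (complex_of_real a) * vv q j = Rm q j (complex_of_real a) * (Lm q j (complex_of_real a) * Wc q a j)" by simp
  also have "\<dots> = Wc q a j" by (rule Rm_apply[OF q0 W])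
  finally show ?thesis .
qed

lemma R_u: assumes jn: "j \<le> n" shows "Rm q j (complex_of_real a) * (u2 q a b s j + complex_of_real a \<cdot>\<^sub>m (vv q j * s 0)) = bcol q (j+1) (dd b s)"
proof -
  have X: "bcol q (j+1) (dd b s) \<in> carrier_mat ((j+1)*q) q" by (rule bcol_carrier)
  have s0: "s 0 \<in> carrier_mat q q" using s_car by simp
  have vv: "vv q j \<in> carrier_mat ((j+1)*q) q" unfolding vv_def blockmat_def by auto
  have u2: "u2 q a b s j \<in> carrier_mat ((j+1)*q) q" unfolding u2_def blockmat_def by auto
  have "Lm q j (complex_of_real a) * bcol q (j+1) (dd b s) = u2 q a b s j + complex_of_real a \<cdot>\<^sub>m (vv q j * s 0)"
  proof (rule eq_matI)
    fix i c assume "i < dim_row (u2 q a b s j + complex_of_real a \<cdot>\<^sub>m (vv q j * s 0))"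
      "c < dim_col (u2 q a b s j + complex_of_real a \<cdot>\<^sub>m (vv q j * s 0))"
    hence i: "i < (j+1)*q" and c: "c < q" using u2 vv s0 by auto
    have Xidx: "\<And>i. i < (j+1)*q \<Longrightarrow> bcol q (j+1) (dd b s) $$ (i,c) = dd b s (i div q) $$ (i mod q, c)"
      unfolding bcol_def using c q0 by (simp add: blockmat_index)
    have vs: "(vv q j * s 0) $$ (i,c) = (if i div q = 0 then s 0 $$ (i mod q, c) else 0)"
    proof -
      have "(vv q j * s 0) $$ (i,c) = (\<Sum>t<q. vv q j $$ (i,t) * s 0 $$ (t,c))"
        using vv s0 i c by (auto simp: scalar_prod_def lessThan_atLeast0 intro!: sum.cong)
      also have "\<dots> = (\<Sum>t<q. (if i div q = 0 \<and> t = i mod q then s 0 $$ (t,c) else 0))"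
        by (rule sum.cong, insert i q0, auto simp: vv_def blockmat_index)
      also have "\<dots> = (if i div q = 0 then s 0 $$ (i mod q, c) else 0)"
        using q0 by (cases "i div q = 0", auto simp: sum.delta)
      finally show ?thesis .
    qed
    have uidx: "u2 q a b s j $$ (i,c) = (if i div q = 0 then u20 a b s else - shat a b s (i div q - 1)) $$ (i mod q, c)"
      unfolding u2_def using i c q0 by (simp add: blockmat_index)
    have L: "(Lm q j (complex_of_real a) * bcol q (j+1) (dd b s)) $$ (i,c)
       = bcol q (j+1) (dd b s) $$ (i,c) - complex_of_real a * (if q \<le> i then bcol q (j+1) (dd b s) $$ (i-q,c) else 0)"
      by (rule Lm_mult[OF q0 X i c])
    have R: "(u2 q a b s j + complex_of_real a \<cdot>\<^sub>m (vv q j * s 0)) $$ (i,c) = u2 q a b s j $$ (i,c) + complex_of_real a * (vv q j * s 0) $$ (i,c)"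
      using u2 vv s0 i c by simp
    have imq: "i mod q < q" using q0 by simp
    show "(Lm q j (complex_of_real a) * bcol q (j+1) (dd b s)) $$ (i,c) = (u2 q a b s j + complex_of_real a \<cdot>\<^sub>m (vv q j * s 0)) $$ (i,c)"
    proof (cases "q \<le> i")
      case False
      have d: "i div q = 0" "i mod q = i" using False by auto
      have c1: "s 1 \<in> carrier_mat q q" using s_car n by simp
      show ?thesis unfolding L R vs uidx using False Xidx[OF i] d s0 c1 i c
        by (simp add: dd_def u20_def algebra_simps)
    next
      case True
      then obtain m where m: "i = m + q" by (metis le_add_diff_inverse2)
      define p where "p = m div q"
      have mi: "m < (j+1)*q" using m i by simp
      have pj: "p < j"
      proof -
        have "i div q = p + 1" unfolding p_def m using q0 by simp
        moreover have "i div q < j + 1" using i q0 by (simp add: less_mult_imp_div_less)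
        ultimately show ?thesis by simp
      qed
      have d: "i div q = p + 1" "i mod q = m mod q" "m div q = p" unfolding p_def m using q0 by auto
      have cs: "s p \<in> carrier_mat q q" "s (p+1) \<in> carrier_mat q q" "s (p+2) \<in> carrier_mat q q"
        using s_car pj jn by auto
      have mq: "m mod q < q" using q0 by simp
      have "(Lm q j (complex_of_real a) * bcol q (j+1) (dd b s)) $$ (i,c)
          = dd b s (p+1) $$ (m mod q, c) - complex_of_real a * dd b s p $$ (m mod q, c)"
        unfolding L using True Xidx[OF i] Xidx[OF mi] d m by simp
      also have "\<dots> = (- shat a b s p) $$ (m mod q, c)"
        using cs mq c by (simp add: dd_def shat_def algebra_simps)
      also have "\<dots> = (u2 q a b s j + complex_of_real a \<cdot>\<^sub>m (vv q j * s 0)) $$ (i,c)"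
        unfolding R vs uidx using d by simp
      finally show ?thesis .
    qed
  qed (use u2 vv s0 in auto)
  hence "Rm q j (complex_of_real a) * (u2 q a b s j + complex_of_real a \<cdot>\<^sub>m (vv q j * s 0))
       = Rm q j (complex_of_real a) * (Lm q j (complex_of_real a) * bcol q (j+1) (dd b s))" by simp
  also have "\<dots> = bcol q (j+1) (dd b s)" by (rule Rm_apply[OF q0 X])
  finally show ?thesis .
qed

end




lemma sum_restrict: assumes "(M::nat) \<le> N"
  shows "(\<Sum>t<N. (if t < M then h t else (0::complex))) = (\<Sum>t<M. h t)"
proof -
  have "(\<Sum>t<N. (if t < M then h t else (0::complex))) = (\<Sum>t<M. (if t < M then h t else (0::complex)))"
    by (rule sum.mono_neutral_right, insert assms, auto)
  also have "\<dots> = (\<Sum>t<M. h t)" by (rule sum.cong, auto)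
  finally show ?thesis .
qed

lemma sum_shiftq: "(\<Sum>t<(N::nat)+(q::nat). (if q \<le> t then h (t-q) else (0::complex))) = (\<Sum>k<N. h k)"
proof -
  have "(\<Sum>t<N+q. (if q \<le> t then h (t-q) else (0::complex)))
      = (\<Sum>t\<in>{0..<q}. (if q \<le> t then h (t-q) else (0::complex))) + (\<Sum>t\<in>{q..<N+q}. (if q \<le> t then h (t-q) else (0::complex)))"
    unfolding lessThan_atLeast0 by (rule sum.atLeastLessThan_concat[symmetric], simp, simp)
  also have "(\<Sum>t\<in>{0..<q}. (if q \<le> t then h (t-q) else (0::complex))) = 0" by (rule sum.neutral, auto)
  also have "(\<Sum>t\<in>{q..<N+q}. (if q \<le> t then h (t-q) else (0::complex))) = (\<Sum>k\<in>{0..<N}. (if q \<le> k+q then h (k+q-q) else (0::complex)))"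
    using sum.shift_bounds_nat_ivl[of "\<lambda>t. (if q \<le> t then h (t-q) else (0::complex))" 0 q N] by simp
  also have "\<dots> = (\<Sum>k<N. h k)" by (simp add: lessThan_atLeast0)
  finally show ?thesis by simp
qed

lemma mv_idx: assumes "(M::complex mat) \<in> carrier_mat r c" "w \<in> carrier_vec c" "i < r"
  shows "(M *\<^sub>v w) $ i = (\<Sum>k<c. M $$ (i,k) * w $ k)"
  using assms by (auto simp: scalar_prod_def lessThan_atLeast0 intro!: sum.cong)

lemma hankel_idx: "i < (j+1)*q \<Longrightarrow> k < (j+1)*q \<Longrightarrow> hankel q f j $$ (i,k) = f (i div q + k div q) $$ (i mod q, k mod q)"
  unfolding hankel_def by (simp add: blockmat_index)

lemma vec_eq_from_diff: assumes "(x::complex vec) \<in> carrier_vec n" "y \<in> carrier_vec n" "x - y = 0\<^sub>v n"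
  shows "x = y"
proof (rule eq_vecI)
  fix i assume "i < dim_vec y"
  hence i: "i < n" using assms by auto
  have "(x - y) $ i = 0" using assms(3) i by simp
  moreover have "(x - y) $ i = x $ i - y $ i" using assms(1,2) i by simp
  ultimately show "x $ i = y $ i" by simp
qed (use assms in auto)

lemma Wc_idx: assumes "i < (j+1)*q" "c < q"
  shows "Wc q a j $$ (i,c) = complex_of_real a ^ (i div q) * (if i mod q = c then 1 else 0)"
proof -
  have "q > 0" using assms by auto
  hence "i mod q < q" by simp
  thus ?thesis unfolding Wc_def bcol_def using assms by (simp add: blockmat_index)
qed

context dsm
begin

lemma ccS: assumes "m \<le> 2*n-1" "x < q" "y < q"
  shows "cc b s (m+1) $$ (x,y) - complex_of_real a * cc b s m $$ (x,y) = shat a b s m $$ (x,y)"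
proof -
  have m2: "m + 2 \<le> 2*n+1" using assms n by simp
  have c: "s m \<in> carrier_mat q q" "s (m+1) \<in> carrier_mat q q" "s (m+2) \<in> carrier_mat q q"
    using s_car assms m2 by auto
  show ?thesis unfolding cc_def shat_def using c assms by (simp add: algebra_simps)
qed

lemma dd_cc_ent: assumes "i \<le> 2*n" "x < q" "y < q"
  shows "dd b s i $$ (x,y) = - cc b s i $$ (x,y)"
proof -
  have c: "s i \<in> carrier_mat q q" "s (i+1) \<in> carrier_mat q q" using s_car assms by auto
  show ?thesis unfolding dd_def cc_def using c assms by simp
qed

lemma injQ: assumes j: "1 \<le> j" "j < n" and v: "v \<in> carrier_vec q"
  and g: "(dd b s j - mat_adjoint (Y2 q a b s j) * minv (H2 q a b s (j-1)) * bcol q j (dd b s)) *\<^sub>v v = 0\<^sub>v q"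
  shows "v = 0\<^sub>v q"
proof -
  have jj: "j - 1 + 1 = j" using j by simp
  let ?H = "H2 q a b s (j-1)" and ?Y = "Y2 q a b s j" and ?X = "bcol q j (dd b s)"
  let ?N = "j*q"
  have Hc: "?H \<in> carrier_mat ?N ?N" using hankel_carrier[of q "shat a b s" "j-1"] unfolding H2_def jj .
  have pdH: "pos_def ?H" by (rule pd_H2, insert j, simp)
  note Hi = pd_minv[OF pdH Hc]
  have Y: "?Y \<in> carrier_mat ?N q" unfolding Y2_bcol by simp
  have X: "?X \<in> carrier_mat ?N q" by simp
  have Yt: "mat_adjoint ?Y \<in> carrier_mat q ?N" using Y by auto
  have HiX: "minv ?H * ?X \<in> carrier_mat ?N q" using Hi X by auto
  have D: "dd b s j \<in> carrier_mat q q" using dd_car j by simp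
  define w where "w = (minv ?H * ?X) *\<^sub>v v"
  have w: "w \<in> carrier_vec ?N" unfolding w_def using HiX v by auto
  have Hw: "?H *\<^sub>v w = ?X *\<^sub>v v" unfolding w_def
    using assoc_mult_mat_vec[OF Hc HiX v, symmetric] inv_cancel[OF Hc Hi(1) Hi(2) X] by simp
  have Yw: "mat_adjoint ?Y *\<^sub>v w = dd b s j *\<^sub>v v"
  proof -
    have T: "mat_adjoint ?Y * minv ?H * ?X = mat_adjoint ?Y * (minv ?H * ?X)"
      by (rule assoc_mult_mat[OF Yt Hi(1) X])
    have Tc: "mat_adjoint ?Y * minv ?H * ?X \<in> carrier_mat q q" using Yt HiX T by auto
    have "dd b s j *\<^sub>v v - (mat_adjoint ?Y * minv ?H * ?X) *\<^sub>v v = 0\<^sub>v q"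
      using g minus_mult_distrib_mat_vec[OF D Tc v] by simp
    moreover have "(mat_adjoint ?Y * minv ?H * ?X) *\<^sub>v v = mat_adjoint ?Y *\<^sub>v w"
      unfolding T w_def by (rule assoc_mult_mat_vec[OF Yt HiX v])
    ultimately have Df: "dd b s j *\<^sub>v v - mat_adjoint ?Y *\<^sub>v w = 0\<^sub>v q" by simp
    have C1: "dd b s j *\<^sub>v v \<in> carrier_vec q" using mult_mat_vec_carrier[OF D v] .
    have C2: "mat_adjoint ?Y *\<^sub>v w \<in> carrier_vec q" using Yt w by auto
    show ?thesis using vec_eq_from_diff[OF C1 C2 Df] by simp
  qed
  have E: "\<And>i. i < (j+1)*q \<Longrightarrow> (\<Sum>k<?N. shat a b s (i div q + k div q) $$ (i mod q, k mod q) * w $ k)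
            = (\<Sum>c<q. dd b s (i div q) $$ (i mod q, c) * v $ c)"
  proof -
    fix i assume i: "i < (j+1)*q"
    have imq: "i mod q < q" using q0 by simp
    show "(\<Sum>k<?N. shat a b s (i div q + k div q) $$ (i mod q, k mod q) * w $ k)
            = (\<Sum>c<q. dd b s (i div q) $$ (i mod q, c) * v $ c)"
    proof (cases "i < ?N")
      case True
      have "(?H *\<^sub>v w) $ i = (\<Sum>k<?N. shat a b s (i div q + k div q) $$ (i mod q, k mod q) * w $ k)"
        unfolding mv_idx[OF Hc w True]
      proof (rule sum.cong[OF refl])
        fix k assume "k \<in> {..<?N}"
        thus "?H $$ (i,k) * w $ k = shat a b s (i div q + k div q) $$ (i mod q, k mod q) * w $ k"
          using hankel_idx[of i "j-1" q k "shat a b s"] True jj unfolding H2_def by simp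
      qed
      moreover have "(?X *\<^sub>v v) $ i = (\<Sum>c<q. dd b s (i div q) $$ (i mod q, c) * v $ c)"
        unfolding mv_idx[OF X v True]
        by (rule sum.cong[OF refl], insert True, auto simp: bcol_def blockmat_index)
      ultimately show ?thesis using Hw by simp
    next
      case False
      define r where "r = i - ?N"
      have r: "r < q" using False i unfolding r_def by auto
      have id: "i div q = j" "i mod q = r" using blk[of j q i] False i unfolding r_def by auto
      have "(mat_adjoint ?Y *\<^sub>v w) $ r = (\<Sum>k<?N. shat a b s (i div q + k div q) $$ (i mod q, k mod q) * w $ k)"
        unfolding mv_idx[OF Yt w r]
      proof (rule sum.cong[OF refl])
        fix k assume "k \<in> {..<?N}"
        hence k: "k < ?N" by simp
        have kd: "k div q < j" using k by (simp add: less_mult_imp_div_less)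
        have kmq: "k mod q < q" using q0 by simp
        have "mat_adjoint ?Y $$ (r,k) = cnj (?Y $$ (k,r))" by (rule adj_index, insert Y k r, auto)
        also have "\<dots> = cnj (shat a b s (j + k div q) $$ (k mod q, r))"
          unfolding Y2_bcol bcol_def using k r by (simp add: blockmat_index)
        also have "\<dots> = shat a b s (j + k div q) $$ (r, k mod q)"
          by (rule herm_ent, insert shat_herm[of "j + k div q"] kd j r kmq, auto)
        finally show "mat_adjoint ?Y $$ (r,k) * w $ k = shat a b s (i div q + k div q) $$ (i mod q, k mod q) * w $ k"
          using id by simp
      qed
      moreover have "(dd b s j *\<^sub>v v) $ r = (\<Sum>c<q. dd b s (i div q) $$ (i mod q, c) * v $ c)"
        unfolding mv_idx[OF D v r] id ..
      ultimately show ?thesis using Yw by simp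
    qed
  qed
  define p where "p = vec ((j+1)*q) (\<lambda>t. (if q \<le> t then w $ (t-q) else 0)
       - complex_of_real a * (if t < ?N then w $ t else 0) + (if t < q then v $ t else 0))"
  have p: "p \<in> carrier_vec ((j+1)*q)" unfolding p_def by simp
  let ?K = "K1 q b s j"
  have Kc: "?K \<in> carrier_mat ((j+1)*q) ((j+1)*q)" unfolding K1_def by (rule hankel_carrier)
  have pdK: "pos_def ?K" by (rule pd_K1, insert j, simp)
  have Kp: "?K *\<^sub>v p = 0\<^sub>v ((j+1)*q)"
  proof (rule eq_vecI)
    fix i assume "i < dim_vec (0\<^sub>v ((j+1)*q) :: complex vec)"
    hence i: "i < (j+1)*q" by simp
    have imq: "i mod q < q" using q0 by simp
    have id: "i div q \<le> j" using less_mult_imp_div_less[OF i] by simp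
    let ?C = "\<lambda>t. cc b s (i div q + t div q) $$ (i mod q, t mod q)"
    have e: "(j+1)*q = ?N + q" by simp
    have "(?K *\<^sub>v p) $ i = (\<Sum>t<(j+1)*q. ?C t * p $ t)"
      unfolding mv_idx[OF Kc p i]
      by (rule sum.cong[OF refl], insert i, auto simp: K1_cc hankel_idx)
    also have "\<dots> = (\<Sum>t<(j+1)*q. (if q \<le> t then ?C t * w $ (t-q) else 0))
        - complex_of_real a * (\<Sum>t<(j+1)*q. (if t < ?N then ?C t * w $ t else 0))
        + (\<Sum>t<(j+1)*q. (if t < q then ?C t * v $ t else 0))"
    proof -
      have "(\<Sum>t<(j+1)*q. ?C t * p $ t) = (\<Sum>t<(j+1)*q. (if q \<le> t then ?C t * w $ (t-q) else 0)
          - complex_of_real a * (if t < ?N then ?C t * w $ t else 0) + (if t < q then ?C t * v $ t else 0))"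
        by (rule sum.cong[OF refl], auto simp: p_def algebra_simps)
      thus ?thesis by (simp only: sum.distrib sum_subtractf sum_distrib_left)
    qed
    also have "(\<Sum>t<(j+1)*q. (if q \<le> t then ?C t * w $ (t-q) else 0)) = (\<Sum>k<?N. ?C (k+q) * w $ k)"
    proof -
      have "(\<Sum>t<(j+1)*q. (if q \<le> t then ?C t * w $ (t-q) else 0)) = (\<Sum>t<?N + q. (if q \<le> t then ?C (t - q + q) * w $ (t-q) else 0))"
        unfolding e by (rule sum.cong, auto)
      also have "\<dots> = (\<Sum>k<?N. ?C (k+q) * w $ k)" by (rule sum_shiftq)
      finally show ?thesis .
    qed
    also have "(\<Sum>t<(j+1)*q. (if t < ?N then ?C t * w $ t else 0)) = (\<Sum>k<?N. ?C k * w $ k)"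
      by (rule sum_restrict, simp)
    also have "(\<Sum>t<(j+1)*q. (if t < q then ?C t * v $ t else 0)) = (\<Sum>t<q. ?C t * v $ t)"
      by (rule sum_restrict, simp)
    also have "(\<Sum>k<?N. ?C (k+q) * w $ k) - complex_of_real a * (\<Sum>k<?N. ?C k * w $ k)
        = (\<Sum>k<?N. shat a b s (i div q + k div q) $$ (i mod q, k mod q) * w $ k)"
    proof -
      have "(\<Sum>k<?N. ?C (k+q) * w $ k) - complex_of_real a * (\<Sum>k<?N. ?C k * w $ k)
          = (\<Sum>k<?N. (?C (k+q) - complex_of_real a * ?C k) * w $ k)"
        by (simp add: sum_subtractf sum_distrib_left algebra_simps)
      also have "\<dots> = (\<Sum>k<?N. shat a b s (i div q + k div q) $$ (i mod q, k mod q) * w $ k)"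
      proof (rule sum.cong[OF refl])
        fix k assume "k \<in> {..<?N}"
        hence k: "k < ?N" by simp
        have kd: "k div q < j" using k by (simp add: less_mult_imp_div_less)
        have kq: "(k + q) div q = k div q + 1" "(k+q) mod q = k mod q" using q0 by auto
        have kmq: "k mod q < q" using q0 by simp
        have "?C (k+q) - complex_of_real a * ?C k = shat a b s (i div q + k div q) $$ (i mod q, k mod q)"
          unfolding kq using ccS[of "i div q + k div q" "i mod q" "k mod q"] kd id j imq kmq by simp
        thus "(?C (k+q) - complex_of_real a * ?C k) * w $ k = shat a b s (i div q + k div q) $$ (i mod q, k mod q) * w $ k"
          by simp
      qed
      finally show ?thesis .
    qed
    also have "(\<Sum>t<q. ?C t * v $ t) = (\<Sum>c<q. cc b s (i div q) $$ (i mod q, c) * v $ c)"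
      by (rule sum.cong, auto)
    also have "(\<Sum>k<?N. shat a b s (i div q + k div q) $$ (i mod q, k mod q) * w $ k)
        = - (\<Sum>c<q. cc b s (i div q) $$ (i mod q, c) * v $ c)"
      unfolding E[OF i]
      by (simp add: sum_negf[symmetric], rule sum.cong, insert dd_cc_ent[of "i div q" "i mod q"] id j imq, auto)
    finally show "(?K *\<^sub>v p) $ i = 0\<^sub>v ((j+1)*q) $ i" using i by simp
  qed (use Kc in auto)
  have p0: "p = 0\<^sub>v ((j+1)*q)" by (rule pd_inj[OF pdK Kc p Kp])
  have pz: "\<And>t. t < (j+1)*q \<Longrightarrow> (if q \<le> t then w $ (t-q) else 0)
       - complex_of_real a * (if t < ?N then w $ t else 0) + (if t < q then v $ t else 0) = 0"
  proof -
    fix t assume t: "t < (j+1)*q"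
    have "p $ t = 0" using p0 t by simp
    thus "(if q \<le> t then w $ (t-q) else 0)
       - complex_of_real a * (if t < ?N then w $ t else 0) + (if t < q then v $ t else 0) = 0"
      unfolding p_def using t by simp
  qed
  have W0: "\<And>k. k < ?N \<Longrightarrow> w $ k = 0"
  proof -
    fix k0 assume "k0 < ?N"
    thus "w $ k0 = 0"
    proof (induction "j*q - k0" arbitrary: k0 rule: less_induct)
      case (less k)
      have t: "k + q < (j+1)*q" using less.prems by simp
      have e: "w $ k - complex_of_real a * (if k + q < ?N then w $ (k+q) else 0) = 0"
        using pz[OF t] q0 by simp
      show ?case
      proof (cases "k + q < ?N")
        case True
        have "w $ (k+q) = 0" by (rule less.hyps, insert True q0, auto)
        thus ?thesis using e True by simp
      next
        case False thus ?thesis using e by simp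
      qed
    qed
  qed
  show "v = 0\<^sub>v q"
  proof (rule eq_vecI)
    fix r assume "r < dim_vec (0\<^sub>v q :: complex vec)"
    hence r: "r < q" by simp
    have r1: "r < (j+1)*q" using r by (simp add: trans_less_add1)
    have rN: "r < ?N" using r j by (metis le_trans less_le_trans mult_le_mono1 mult_1 nat_less_le)
    have "w $ r = 0" by (rule W0[OF rN])
    thus "v $ r = 0\<^sub>v q $ r" using pz[OF r1] r by simp
  qed (use v in auto)
qed

lemma injG: assumes j: "1 \<le> j" "j \<le> n" and v: "v \<in> carrier_vec q"
  and g: "(complex_of_real a ^ j \<cdot>\<^sub>m 1\<^sub>m q - mat_adjoint (Yt1 q b s j) * minv (K1 q b s (j-1)) * Wc q a (j-1)) *\<^sub>v v = 0\<^sub>v q"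
  shows "v = 0\<^sub>v q"
proof -
  have jj: "j - 1 + 1 = j" using j by simp
  let ?K = "K1 q b s (j-1)" and ?Y = "Yt1 q b s j" and ?W = "Wc q a (j-1)"
  let ?N = "j*q"
  have Kc: "?K \<in> carrier_mat ?N ?N" using hankel_carrier[of q _ "j-1"] unfolding K1_def jj .
  have pdK: "pos_def ?K" by (rule pd_K1, insert j, simp)
  note Ki = pd_minv[OF pdK Kc]
  have Y: "?Y \<in> carrier_mat ?N q" unfolding Yt1_cc by simp
  have W: "?W \<in> carrier_mat ?N q" unfolding Wc_def jj by (rule bcol_carrier)
  have Yt: "mat_adjoint ?Y \<in> carrier_mat q ?N" using Y by auto
  have KiW: "minv ?K * ?W \<in> carrier_mat ?N q" using Ki W by auto
  define w where "w = (minv ?K * ?W) *\<^sub>v v"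
  have w: "w \<in> carrier_vec ?N" unfolding w_def using KiW v by auto
  have Kw: "?K *\<^sub>v w = ?W *\<^sub>v v" unfolding w_def
    using assoc_mult_mat_vec[OF Kc KiW v, symmetric] inv_cancel[OF Kc Ki(1) Ki(2) W] by simp
  have Yw: "mat_adjoint ?Y *\<^sub>v w = (complex_of_real a ^ j \<cdot>\<^sub>m 1\<^sub>m q) *\<^sub>v v"
  proof -
    have T: "mat_adjoint ?Y * minv ?K * ?W = mat_adjoint ?Y * (minv ?K * ?W)"
      by (rule assoc_mult_mat[OF Yt Ki(1) W])
    have Tc: "mat_adjoint ?Y * minv ?K * ?W \<in> carrier_mat q q" using Yt KiW T by auto
    have A: "complex_of_real a ^ j \<cdot>\<^sub>m 1\<^sub>m q \<in> carrier_mat q q" by simp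
    have "(complex_of_real a ^ j \<cdot>\<^sub>m 1\<^sub>m q) *\<^sub>v v - (mat_adjoint ?Y * minv ?K * ?W) *\<^sub>v v = 0\<^sub>v q"
      using g minus_mult_distrib_mat_vec[OF A Tc v] by simp
    moreover have "(mat_adjoint ?Y * minv ?K * ?W) *\<^sub>v v = mat_adjoint ?Y *\<^sub>v w"
      unfolding T w_def by (rule assoc_mult_mat_vec[OF Yt KiW v])
    ultimately have D: "(complex_of_real a ^ j \<cdot>\<^sub>m 1\<^sub>m q) *\<^sub>v v - mat_adjoint ?Y *\<^sub>v w = 0\<^sub>v q" by simp
    have C1: "(complex_of_real a ^ j \<cdot>\<^sub>m 1\<^sub>m q) *\<^sub>v v \<in> carrier_vec q" using mult_mat_vec_carrier[OF A v] .
    have C2: "mat_adjoint ?Y *\<^sub>v w \<in> carrier_vec q" using Yt w by auto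
    show ?thesis using vec_eq_from_diff[OF C1 C2 D] by simp
  qed
  have E: "\<And>i. i < (j+1)*q \<Longrightarrow> (\<Sum>k<?N. cc b s (i div q + k div q) $$ (i mod q, k mod q) * w $ k)
            = complex_of_real a ^ (i div q) * v $ (i mod q)"
  proof -
    fix i assume i: "i < (j+1)*q"
    have imq: "i mod q < q" using q0 by simp
    show "(\<Sum>k<?N. cc b s (i div q + k div q) $$ (i mod q, k mod q) * w $ k) = complex_of_real a ^ (i div q) * v $ (i mod q)"
    proof (cases "i < ?N")
      case True
      have "(?K *\<^sub>v w) $ i = (\<Sum>k<?N. cc b s (i div q + k div q) $$ (i mod q, k mod q) * w $ k)"
        unfolding mv_idx[OF Kc w True]
      proof (rule sum.cong[OF refl])
        fix k assume "k \<in> {..<?N}"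
        thus "?K $$ (i,k) * w $ k = cc b s (i div q + k div q) $$ (i mod q, k mod q) * w $ k"
          using hankel_idx[of i "j-1" q k "cc b s"] True jj unfolding K1_cc by simp
      qed
      moreover have "(?W *\<^sub>v v) $ i = complex_of_real a ^ (i div q) * v $ (i mod q)"
      proof -
        have "(?W *\<^sub>v v) $ i = (\<Sum>c<q. (if c = i mod q then complex_of_real a ^ (i div q) * v $ c else 0))"
          unfolding mv_idx[OF W v True]
        proof (rule sum.cong[OF refl])
          fix c assume "c \<in> {..<q}"
          thus "?W $$ (i,c) * v $ c = (if c = i mod q then complex_of_real a ^ (i div q) * v $ c else 0)"
            using Wc_idx[of i "j-1" q c a] True jj by auto
        qed
        also have "\<dots> = complex_of_real a ^ (i div q) * v $ (i mod q)" using imq by (simp add: sum.delta)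
        finally show ?thesis .
      qed
      ultimately show ?thesis using Kw by simp
    next
      case False
      define r where "r = i - ?N"
      have r: "r < q" using False i unfolding r_def by auto
      have id: "i div q = j" "i mod q = r" using blk[of j q i] False i unfolding r_def by auto
      have "(mat_adjoint ?Y *\<^sub>v w) $ r = (\<Sum>k<?N. cc b s (i div q + k div q) $$ (i mod q, k mod q) * w $ k)"
        unfolding mv_idx[OF Yt w r]
      proof (rule sum.cong[OF refl])
        fix k assume "k \<in> {..<?N}"
        hence k: "k < ?N" by simp
        have kd: "k div q < j" using k by (simp add: less_mult_imp_div_less)
        have kmq: "k mod q < q" using q0 by simp
        have "mat_adjoint ?Y $$ (r,k) = cnj (?Y $$ (k,r))" by (rule adj_index, insert Y k r, auto)
        also have "\<dots> = cnj (cc b s (j + k div q) $$ (k mod q, r))"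
          unfolding Yt1_cc bcol_def using k r by (simp add: blockmat_index)
        also have "\<dots> = cc b s (j + k div q) $$ (r, k mod q)"
          by (rule herm_ent, insert cc_herm[of "j + k div q"] kd j r kmq, auto)
        finally show "mat_adjoint ?Y $$ (r,k) * w $ k = cc b s (i div q + k div q) $$ (i mod q, k mod q) * w $ k"
          using id by simp
      qed
      moreover have "((complex_of_real a ^ j \<cdot>\<^sub>m 1\<^sub>m q) *\<^sub>v v) $ r = complex_of_real a ^ j * v $ r"
      proof -
        have A: "complex_of_real a ^ j \<cdot>\<^sub>m 1\<^sub>m q \<in> carrier_mat q q" by simp
        have "((complex_of_real a ^ j \<cdot>\<^sub>m 1\<^sub>m q) *\<^sub>v v) $ r = (\<Sum>k<q. (if k = r then complex_of_real a ^ j * v $ k else 0))"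
          unfolding mv_idx[OF A v r] by (rule sum.cong, insert r, auto)
        also have "\<dots> = complex_of_real a ^ j * v $ r" using r by (simp add: sum.delta)
        finally show ?thesis .
      qed
      ultimately show ?thesis using Yw id by simp
    qed
  qed
  let ?H = "H2 q a b s (j-1)"
  have Hc: "?H \<in> carrier_mat ?N ?N" using hankel_carrier[of q "shat a b s" "j-1"] unfolding H2_def jj .
  have pdH: "pos_def ?H" by (rule pd_H2, insert j, simp)
  have Hw: "?H *\<^sub>v w = 0\<^sub>v ?N"
  proof (rule eq_vecI)
    fix i assume "i < dim_vec (0\<^sub>v ?N :: complex vec)"
    hence i: "i < ?N" by simp
    have i1: "i < (j+1)*q" "i + q < (j+1)*q" using i by auto
    have iq: "(i + q) div q = i div q + 1" "(i+q) mod q = i mod q" using q0 by auto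
    have imq: "i mod q < q" using q0 by simp
    have "(?H *\<^sub>v w) $ i = (\<Sum>k<?N. cc b s ((i+q) div q + k div q) $$ ((i+q) mod q, k mod q) * w $ k
                  - complex_of_real a * (cc b s (i div q + k div q) $$ (i mod q, k mod q) * w $ k))"
      unfolding mv_idx[OF Hc w i]
    proof (rule sum.cong[OF refl])
      fix k assume "k \<in> {..<?N}"
      hence k: "k < ?N" by simp
      have kd: "k div q < j" using k by (simp add: less_mult_imp_div_less)
      have id: "i div q < j" using i by (simp add: less_mult_imp_div_less)
      have kmq: "k mod q < q" using q0 by simp
      have "?H $$ (i,k) = shat a b s (i div q + k div q) $$ (i mod q, k mod q)"
        unfolding H2_def using hankel_idx[of i "j-1" q k] i k jj by simp
      also have "\<dots> = cc b s (i div q + k div q + 1) $$ (i mod q, k mod q) - complex_of_real a * cc b s (i div q + k div q) $$ (i mod q, k mod q)"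
        using ccS[of "i div q + k div q" "i mod q" "k mod q"] kd id j imq kmq by simp
      finally have Hik: "?H $$ (i,k) = cc b s (i div q + k div q + 1) $$ (i mod q, k mod q) - complex_of_real a * cc b s (i div q + k div q) $$ (i mod q, k mod q)" .
      show "?H $$ (i,k) * w $ k = cc b s ((i+q) div q + k div q) $$ ((i+q) mod q, k mod q) * w $ k
                  - complex_of_real a * (cc b s (i div q + k div q) $$ (i mod q, k mod q) * w $ k)"
        unfolding iq Hik by (simp add: algebra_simps)
    qed
    also have "\<dots> = (\<Sum>k<?N. cc b s ((i+q) div q + k div q) $$ ((i+q) mod q, k mod q) * w $ k)
                  - complex_of_real a * (\<Sum>k<?N. cc b s (i div q + k div q) $$ (i mod q, k mod q) * w $ k)"
      by (simp add: sum_subtractf sum_distrib_left)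
    also have "\<dots> = 0" unfolding E[OF i1(1)] E[OF i1(2)] unfolding iq by simp
    finally show "(?H *\<^sub>v w) $ i = 0\<^sub>v ?N $ i" using i by simp
  qed (use Hc in auto)
  have w0: "w = 0\<^sub>v ?N" by (rule pd_inj[OF pdH Hc w Hw])
  show "v = 0\<^sub>v q"
  proof (rule eq_vecI)
    fix r assume "r < dim_vec (0\<^sub>v q :: complex vec)"
    hence r: "r < q" by simp
    have r1: "r < (j+1)*q" using r by (simp add: trans_less_add1)
    have "(\<Sum>k<?N. cc b s (r div q + k div q) $$ (r mod q, k mod q) * w $ k) = 0"
      using w0 by simp
    thus "v $ r = 0\<^sub>v q $ r" using E[OF r1] r by simp
  qed (use v in auto)
qed

end




lemma lin_d: assumes "(P::complex mat) \<in> carrier_mat n m" "Q \<in> carrier_mat n m"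
  shows "P + Q - P = Q" by (rule eq_matI, insert assms, auto)

lemma neg_quad: assumes g: "(g::complex mat) \<in> carrier_mat q m" and P: "P \<in> carrier_mat q q"
  shows "mat_adjoint (- g) * P * (- g) = mat_adjoint g * P * g"
proof -
  have "mat_adjoint (- g) * P * (- g) = (- (mat_adjoint g * P)) * (- g)"
    unfolding adj_uminus using g P by simp
  also have "\<dots> = mat_adjoint g * P * g" using g P by simp
  finally show ?thesis .
qed

context dsm
begin

lemma w_car: "u2 q a b s j + complex_of_real a \<cdot>\<^sub>m (vv q j * s 0) \<in> carrier_mat ((j+1)*q) q"
proof -
  have "vv q j \<in> carrier_mat ((j+1)*q) q" unfolding vv_def blockmat_def by auto
  moreover have "s 0 \<in> carrier_mat q q" using s_car by simp
  ultimately show ?thesis unfolding u2_def blockmat_def by auto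
qed

lemma vv_car: "vv q j \<in> carrier_mat ((j+1)*q) q" unfolding vv_def blockmat_def by auto

lemma quad_R: assumes R: "(R::complex mat) \<in> carrier_mat N N" and w: "w \<in> carrier_mat N m" and H: "Hi \<in> carrier_mat N N"
  shows "mat_adjoint w * mat_adjoint R * Hi * R * w = mat_adjoint (R * w) * Hi * (R * w)"
proof -
  have "mat_adjoint (R * w) = mat_adjoint w * mat_adjoint R" by (rule adj_mult[OF R w])
  hence "mat_adjoint w * mat_adjoint R * Hi * R * w = mat_adjoint (R * w) * Hi * R * w" by simp
  also have "\<dots> = mat_adjoint (R * w) * Hi * (R * w)"
    by (rule assoc_mult_mat[OF mult_carrier_mat[OF adj_carrier[OF mult_carrier_mat[OF R w]] H] R w])
  finally show ?thesis .
qed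

lemma lam_eq: assumes "j \<le> n-1"
  shows "lam q a b s j = mat_adjoint (bcol q (j+1) (dd b s)) * minv (H2 q a b s j) * bcol q (j+1) (dd b s)"
proof -
  have Hi: "minv (H2 q a b s j) \<in> carrier_mat ((j+1)*q) ((j+1)*q)"
    by (rule pd_minv(1)[OF pd_H2[OF assms]], unfold H2_def, rule hankel_carrier)
  show ?thesis unfolding lam_def Let_def
    using quad_R[OF R_car w_car Hi] R_u[of j] assms n by simp
qed

lemma mu_eq: assumes "j \<le> n"
  shows "mu q a b s j = mat_adjoint (Wc q a j) * minv (K1 q b s j) * Wc q a j"
proof -
  have Ki: "minv (K1 q b s j) \<in> carrier_mat ((j+1)*q) ((j+1)*q)"
    by (rule pd_minv(1)[OF pd_K1[OF assms]], unfold K1_def, rule hankel_carrier)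
  show ?thesis unfolding mu_def Let_def
    using quad_R[OF R_car vv_car Ki] R_v[OF assms] by simp
qed

end





context dsm
begin

lemma dd_car': "i \<le> 2*n \<Longrightarrow> dd b s i \<in> carrier_mat q q" by (rule dd_car)

lemma Q2_eq: assumes j: "1 \<le> j" "j < n"
  shows "Q2 q a b s j (complex_of_real a)
     = - (dd b s j - mat_adjoint (Y2 q a b s j) * minv (H2 q a b s (j-1)) * bcol q j (dd b s))"
proof -
  have jj: "j - 1 + 1 = j" using j by simp
  have e: "(j+1)*q = j*q + q" by simp
  have Y: "Y2 q a b s j \<in> carrier_mat (j*q) q" unfolding Y2_bcol by simp
  have Hc: "H2 q a b s (j-1) \<in> carrier_mat (j*q) (j*q)"
    using hankel_carrier[of q "shat a b s" "j-1"] unfolding H2_def jj .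
  have Hi: "minv (H2 q a b s (j-1)) \<in> carrier_mat (j*q) (j*q)"
    by (rule pd_minv(1)[OF pd_H2 Hc], insert j, simp)
  define Z where "Z = mat_adjoint (Y2 q a b s j) * minv (H2 q a b s (j-1))"
  have Z: "Z \<in> carrier_mat q (j*q)" unfolding Z_def using Y Hi by auto
  have R: "Rm q j (complex_of_real a) \<in> carrier_mat (j*q + q) (j*q + q)" using R_car[of j] unfolding e .
  have w: "u2 q a b s j + complex_of_real a \<cdot>\<^sub>m (vv q j * s 0) \<in> carrier_mat (j*q + q) q"
    using w_car[of j] unfolding e .
  have X: "bcol q j (dd b s) \<in> carrier_mat (j*q) q" by simp
  have D: "dd b s j \<in> carrier_mat q q" using dd_car j by simp
  have RC: "rowcat (- Z) (1\<^sub>m q) \<in> carrier_mat q (j*q + q)" using Z by auto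
  have "rowcat (- Z) (1\<^sub>m q) * Rm q j (complex_of_real a) * (u2 q a b s j + complex_of_real a \<cdot>\<^sub>m (vv q j * s 0))
      = rowcat (- Z) (1\<^sub>m q) * bcol q (j+1) (dd b s)"
    using assoc_mult_mat[OF RC R w] R_u[of j] j by simp
  also have "\<dots> = rowcat (- Z) (1\<^sub>m q) * vst (bcol q j (dd b s)) (dd b s j)"
    using bcol_split[of "dd b s" j q] D by simp
  also have "\<dots> = (- Z) * bcol q j (dd b s) + 1\<^sub>m q * dd b s j"
    by (rule rowcat_vst, insert Z X D, auto)
  finally have E: "rowcat (- Z) (1\<^sub>m q) * Rm q j (complex_of_real a) * (u2 q a b s j + complex_of_real a \<cdot>\<^sub>m (vv q j * s 0))
      = (- Z) * bcol q j (dd b s) + 1\<^sub>m q * dd b s j" .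
  have ZX: "(- Z) * bcol q j (dd b s) = - (Z * bcol q j (dd b s))"
    by (rule uminus_mult_left_mat, insert Z X, auto)
  have F: "(- Z) * bcol q j (dd b s) + 1\<^sub>m q * dd b s j = dd b s j - Z * bcol q j (dd b s)"
    unfolding ZX by (rule eq_matI, insert Z X D, auto)
  have "Q2 q a b s j (complex_of_real a) = - (dd b s j - Z * bcol q j (dd b s))"
    unfolding Q2_def Z_def[symmetric] using j E F by simp
  thus ?thesis unfolding Z_def .
qed

lemma Wc_split: assumes "1 \<le> j" shows "Wc q a j = vst (Wc q a (j-1)) (complex_of_real a ^ j \<cdot>\<^sub>m 1\<^sub>m q)"
proof -
  have jj: "j - 1 + 1 = j" using assms by simp
  show ?thesis unfolding Wc_def jj by (rule bcol_split, simp)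
qed

lemma Gamma_eq: assumes j: "1 \<le> j" "j \<le> n"
  shows "Gamma1 q b s j (complex_of_real a)
     = complex_of_real a ^ j \<cdot>\<^sub>m 1\<^sub>m q - mat_adjoint (Yt1 q b s j) * minv (K1 q b s (j-1)) * Wc q a (j-1)"
proof -
  have jj: "j - 1 + 1 = j" using j by simp
  have e: "(j+1)*q = j*q + q" by simp
  have Y: "Yt1 q b s j \<in> carrier_mat (j*q) q" unfolding Yt1_cc by simp
  have Kc: "K1 q b s (j-1) \<in> carrier_mat (j*q) (j*q)"
    using hankel_carrier[of q _ "j-1"] unfolding K1_def jj .
  have Ki: "minv (K1 q b s (j-1)) \<in> carrier_mat (j*q) (j*q)"
    by (rule pd_minv(1)[OF pd_K1 Kc], insert j, simp)
  define Z where "Z = mat_adjoint (Yt1 q b s j) * minv (K1 q b s (j-1))"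
  have Z: "Z \<in> carrier_mat q (j*q)" unfolding Z_def using Y Ki by auto
  have R: "Rm q j (complex_of_real a) \<in> carrier_mat (j*q + q) (j*q + q)" using R_car[of j] unfolding e .
  have w: "vv q j \<in> carrier_mat (j*q + q) q" using vv_car[of j] unfolding e .
  have X: "Wc q a (j-1) \<in> carrier_mat (j*q) q" unfolding Wc_def jj by simp
  have D: "complex_of_real a ^ j \<cdot>\<^sub>m 1\<^sub>m q \<in> carrier_mat q q" by simp
  have RC: "rowcat (- Z) (1\<^sub>m q) \<in> carrier_mat q (j*q + q)" using Z by auto
  have "rowcat (- Z) (1\<^sub>m q) * Rm q j (complex_of_real a) * vv q j = rowcat (- Z) (1\<^sub>m q) * Wc q a j"
    using assoc_mult_mat[OF RC R w] R_v[OF j(2)] by simp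
  also have "\<dots> = rowcat (- Z) (1\<^sub>m q) * vst (Wc q a (j-1)) (complex_of_real a ^ j \<cdot>\<^sub>m 1\<^sub>m q)"
    using Wc_split[OF j(1)] by simp
  also have "\<dots> = (- Z) * Wc q a (j-1) + 1\<^sub>m q * (complex_of_real a ^ j \<cdot>\<^sub>m 1\<^sub>m q)"
    by (rule rowcat_vst, insert Z X D, auto)
  also have "(- Z) * Wc q a (j-1) = - (Z * Wc q a (j-1))"
    by (rule uminus_mult_left_mat, insert Z X, auto)
  also have "- (Z * Wc q a (j-1)) + 1\<^sub>m q * (complex_of_real a ^ j \<cdot>\<^sub>m 1\<^sub>m q) = complex_of_real a ^ j \<cdot>\<^sub>m 1\<^sub>m q - Z * Wc q a (j-1)"
    by (rule eq_matI, insert Z X D, auto)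
  finally have E: "rowcat (- Z) (1\<^sub>m q) * Rm q j (complex_of_real a) * vv q j = complex_of_real a ^ j \<cdot>\<^sub>m 1\<^sub>m q - Z * Wc q a (j-1)" .
  show ?thesis unfolding Gamma1_def Z_def[symmetric] using j E by simp
qed

end




context dsm
begin

lemma l_pos: assumes j: "1 \<le> j" "j < n"
  shows "lpar q a b s j = mat_adjoint (Q2 q a b s j (complex_of_real a)) * minv (H2hat q a b s j) * Q2 q a b s j (complex_of_real a)
     \<and> pos_def (lpar q a b s j)"
proof -
  have jj: "j - 1 + 1 = j" using j by simp
  let ?A = "H2 q a b s (j-1)" and ?B = "Y2 q a b s j" and ?D = "shat a b s (2*j)"
  have A: "?A \<in> carrier_mat (j*q) (j*q)" using hankel_carrier[of q "shat a b s" "j-1"] unfolding H2_def jj .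
  have B: "?B \<in> carrier_mat (j*q) q" unfolding Y2_bcol by simp
  have D: "?D \<in> carrier_mat q q" using shat_herm[of "2*j"] j by simp
  have Hs: "H2 q a b s j = four_block_mat ?A ?B (mat_adjoint ?B) ?D" by (rule H2_split, insert j, auto)
  have pd: "pos_def (four_block_mat ?A ?B (mat_adjoint ?B) ?D)" using pd_H2[of j] j Hs by simp
  let ?x1 = "bcol q j (dd b s)" and ?x2 = "dd b s j"
  have x1: "?x1 \<in> carrier_mat (j*q) q" by simp
  have x2: "?x2 \<in> carrier_mat q q" using dd_car j by simp
  note SQ = schur_quad[OF A B D pd x1 x2]
  define S where "S = ?D - mat_adjoint ?B * minv ?A * ?B"
  define g where "g = ?x2 - mat_adjoint ?B * minv ?A * ?x1"
  have pdS: "pos_def S" unfolding S_def by (rule pd_schur[OF A B D pd])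
  have S: "S \<in> carrier_mat q q" unfolding S_def
    by (rule minus_carrier_mat, insert B pd_minv(1)[OF pd_block(1)[OF A B adj_carrier[OF B] D pd] A], auto)
  have Si: "minv S \<in> carrier_mat q q" by (rule pd_minv(1)[OF pdS S])
  have g: "g \<in> carrier_mat q q" unfolding g_def
    by (rule minus_carrier_mat, insert B x1 pd_minv(1)[OF pd_block(1)[OF A B adj_carrier[OF B] D pd] A], auto)
  have P1: "mat_adjoint ?x1 * minv ?A * ?x1 \<in> carrier_mat q q" using A x1 pd_minv(1)[OF pd_block(1)[OF A B adj_carrier[OF B] D pd] A] by auto
  have P2: "mat_adjoint g * minv S * g \<in> carrier_mat q q" using g Si by auto
  have lj: "lam q a b s j = mat_adjoint ?x1 * minv ?A * ?x1 + mat_adjoint g * minv S * g"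
    using lam_eq[of j] j Hs bcol_split[of "dd b s" j q] x2 SQ unfolding S_def g_def by simp
  have lj1: "lam q a b s (j-1) = mat_adjoint ?x1 * minv ?A * ?x1"
    using lam_eq[of "j-1"] j unfolding jj by simp
  have lp: "lpar q a b s j = mat_adjoint g * minv S * g"
    unfolding lpar_def using j lj lj1 lin_d[OF P1 P2] by simp
  have Q: "Q2 q a b s j (complex_of_real a) = - g" unfolding g_def using Q2_eq[OF j] by simp
  have Hh: "H2hat q a b s j = S" unfolding H2hat_def S_def using j by simp
  have pos: "pos_def (mat_adjoint g * minv S * g)"
  proof (rule pd_congr[OF pd_minv_pd[OF pdS S] Si g])
    fix v assume "v \<in> carrier_vec q" "g *\<^sub>v v = 0\<^sub>v q"
    thus "v = 0\<^sub>v q" using injQ[OF j] unfolding g_def by blast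
  qed
  show ?thesis unfolding Q Hh lp neg_quad[OF g Si] using pos by simp
qed

lemma m_pos: assumes j: "1 \<le> j" "j \<le> n"
  shows "mpar q a b s j = mat_adjoint (Gamma1 q b s j (complex_of_real a)) * minv (K1hat q b s j) * Gamma1 q b s j (complex_of_real a)
     \<and> pos_def (mpar q a b s j)"
proof -
  have jj: "j - 1 + 1 = j" using j by simp
  let ?A = "K1 q b s (j-1)" and ?B = "Yt1 q b s j" and ?D = "cc b s (2*j)"
  have A: "?A \<in> carrier_mat (j*q) (j*q)" using hankel_carrier[of q _ "j-1"] unfolding K1_def jj .
  have B: "?B \<in> carrier_mat (j*q) q" unfolding Yt1_cc by simp
  have D: "?D \<in> carrier_mat q q" using cc_herm[of "2*j"] j by simp
  have Ks: "K1 q b s j = four_block_mat ?A ?B (mat_adjoint ?B) ?D" by (rule K1_split, insert j, auto)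
  have pd: "pos_def (four_block_mat ?A ?B (mat_adjoint ?B) ?D)" using pd_K1[of j] j Ks by simp
  let ?x1 = "Wc q a (j-1)" and ?x2 = "complex_of_real a ^ j \<cdot>\<^sub>m 1\<^sub>m q"
  have x1: "?x1 \<in> carrier_mat (j*q) q" unfolding Wc_def jj by simp
  have x2: "?x2 \<in> carrier_mat q q" by simp
  note SQ = schur_quad[OF A B D pd x1 x2]
  define S where "S = ?D - mat_adjoint ?B * minv ?A * ?B"
  define g where "g = ?x2 - mat_adjoint ?B * minv ?A * ?x1"
  have Ai: "minv ?A \<in> carrier_mat (j*q) (j*q)" by (rule pd_minv(1)[OF pd_block(1)[OF A B adj_carrier[OF B] D pd] A])
  have pdS: "pos_def S" unfolding S_def by (rule pd_schur[OF A B D pd])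
  have S: "S \<in> carrier_mat q q" unfolding S_def
    by (rule minus_carrier_mat, insert B Ai, auto)
  have Si: "minv S \<in> carrier_mat q q" by (rule pd_minv(1)[OF pdS S])
  have g: "g \<in> carrier_mat q q" unfolding g_def
    by (rule minus_carrier_mat, insert B x1 Ai, auto)
  have P1: "mat_adjoint ?x1 * minv ?A * ?x1 \<in> carrier_mat q q" using Ai x1 by auto
  have P2: "mat_adjoint g * minv S * g \<in> carrier_mat q q" using g Si by auto
  have lj: "mu q a b s j = mat_adjoint ?x1 * minv ?A * ?x1 + mat_adjoint g * minv S * g"
    using mu_eq[of j] j Ks Wc_split[OF j(1)] SQ unfolding S_def g_def by simp
  have lj1: "mu q a b s (j-1) = mat_adjoint ?x1 * minv ?A * ?x1"
    using mu_eq[of "j-1"] j by simp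
  have lp: "mpar q a b s j = mat_adjoint g * minv S * g"
    unfolding mpar_def using j lj lj1 lin_d[OF P1 P2] by simp
  have Q: "Gamma1 q b s j (complex_of_real a) = g" unfolding g_def using Gamma_eq[OF j] by simp
  have Hh: "K1hat q b s j = S" unfolding K1hat_def S_def cc_def Yt1_cc[symmetric] K1_cc[symmetric] using j
    by (simp add: cc_def)
  have pos: "pos_def (mat_adjoint g * minv S * g)"
  proof (rule pd_congr[OF pd_minv_pd[OF pdS S] Si g])
    fix v assume "v \<in> carrier_vec q" "g *\<^sub>v v = 0\<^sub>v q"
    thus "v = 0\<^sub>v q" using injG[OF j] unfolding g_def by blast
  qed
  show ?thesis unfolding Q Hh lp using pos by simp
qed

end




context dsm
begin

lemma dd_neg: assumes "i \<le> 2*n" shows "dd b s i = - cc b s i"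
proof -
  have "s i \<in> carrier_mat q q" "s (i+1) \<in> carrier_mat q q" using s_car assms by auto
  thus ?thesis unfolding dd_def cc_def by (intro eq_matI, auto)
qed

lemma l0: "lpar q a b s 0 = mat_adjoint (Q2 q a b s 0 (complex_of_real a)) * minv (H2hat q a b s 0) * Q2 q a b s 0 (complex_of_real a)
     \<and> pos_def (lpar q a b s 0)"
proof -
  have s0: "s 0 \<in> carrier_mat q q" "s 1 \<in> carrier_mat q q" using s_car n by auto
  have d0: "dd b s 0 \<in> carrier_mat q q" using dd_car by simp
  have sh0: "shat a b s 0 \<in> carrier_mat q q" using shat_herm[of 0] n by simp
  have u: "u20 a b s + complex_of_real a \<cdot>\<^sub>m s 0 = dd b s 0"
    unfolding u20_def dd_def by (rule eq_matI, insert s0, auto simp: algebra_simps)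
  have Q: "Q2 q a b s 0 (complex_of_real a) = - dd b s 0" unfolding Q2_def using u by simp
  have H0: "H2 q a b s 0 = shat a b s 0" unfolding H2_def by (rule hankel0[of "shat a b s" q, OF sh0])
  have lp: "lpar q a b s 0 = mat_adjoint (dd b s 0) * minv (shat a b s 0) * dd b s 0"
    unfolding lpar_def using lam_eq[of 0] bcol1[of "dd b s" q] d0 H0 by simp
  have pdH: "pos_def (shat a b s 0)" using pd_H2[of 0] H0 by simp
  have Si: "minv (shat a b s 0) \<in> carrier_mat q q" by (rule pd_minv(1)[OF pdH sh0])
  have K0: "K1 q b s 0 = cc b s 0" unfolding K1_cc by (rule hankel0, insert cc_herm[of 0], simp)
  have pdK: "pos_def (cc b s 0)" using pd_K1[of 0] K0 by simp
  have c0: "cc b s 0 \<in> carrier_mat q q" using cc_herm[of 0] by simp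
  have pos: "pos_def (mat_adjoint (dd b s 0) * minv (shat a b s 0) * dd b s 0)"
  proof (rule pd_congr[OF pd_minv_pd[OF pdH sh0] Si d0])
    fix v :: "complex vec" assume v: "v \<in> carrier_vec q" "dd b s 0 *\<^sub>v v = 0\<^sub>v q"
    have "- (cc b s 0 *\<^sub>v v) = 0\<^sub>v q" using v dd_neg[of 0] c0 by simp
    hence "cc b s 0 *\<^sub>v v = 0\<^sub>v q" using uminus_zero_vec_eq[OF mult_mat_vec_carrier[OF c0 v(1)]] by simp
    thus "v = 0\<^sub>v q" using pd_inj[OF pdK c0 v(1)] by simp
  qed
  have Hh0: "H2hat q a b s 0 = shat a b s 0" by (simp add: H2hat_def)
  show ?thesis unfolding Q lp Hh0 neg_quad[OF d0 Si] using pos by simp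
qed

lemma m0: "mpar q a b s 0 = mat_adjoint (Gamma1 q b s 0 (complex_of_real a)) * minv (K1hat q b s 0) * Gamma1 q b s 0 (complex_of_real a)
     \<and> pos_def (mpar q a b s 0)"
proof -
  have c0: "cc b s 0 \<in> carrier_mat q q" using cc_herm[of 0] by simp
  have K0: "K1 q b s 0 = cc b s 0" unfolding K1_cc by (rule hankel0[of "cc b s" q, OF c0])
  have pdK: "pos_def (cc b s 0)" using pd_K1[of 0] K0 by simp
  have one: "1 \<cdot>\<^sub>m 1\<^sub>m q = (1\<^sub>m q :: complex mat)" by (rule eq_matI, auto)
  have W0: "Wc q a 0 = 1\<^sub>m q" unfolding Wc_def using bcol1[of "\<lambda>l. complex_of_real a ^ l \<cdot>\<^sub>m 1\<^sub>m q" q] one by simp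
  have Kh: "K1hat q b s 0 = cc b s 0" unfolding K1hat_def cc_def by simp
  have Ki: "minv (cc b s 0) \<in> carrier_mat q q" by (rule pd_minv(1)[OF pdK c0])
  have mp: "mpar q a b s 0 = minv (cc b s 0)"
    unfolding mpar_def using mu_eq[of 0] W0 K0 Ki by simp
  show ?thesis unfolding mp Kh Gamma1_def using Ki pd_minv_pd[OF pdK c0] by simp
qed

end

theorem mainTheorem4:
  fixes q n :: nat and a b :: real and s :: "nat \<Rightarrow> complex mat"
  assumes "q \<ge> 1" and "n \<ge> 1" and "a < b"
    and "\<And>j. j \<le> 2*n+1 \<Longrightarrow> s j \<in> carrier_mat q q \<and> hermitian (s j)"
    and "pos_def (H1 q s n)" and "pos_def (H2 q a b s (n-1))"
    and "pos_def (K1 q b s n)" and "pos_def (K2 q a s n)"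
  shows "(\<forall>j<n. lpar q a b s j
            = mat_adjoint (Q2 q a b s j (complex_of_real a)) * minv (H2hat q a b s j)
              * Q2 q a b s j (complex_of_real a))
       \<and> (\<forall>j\<le>n. mpar q a b s j
            = mat_adjoint (Gamma1 q b s j (complex_of_real a)) * minv (K1hat q b s j)
              * Gamma1 q b s j (complex_of_real a))
       \<and> (\<forall>j<n. pos_def (lpar q a b s j))
       \<and> (\<forall>j\<le>n. pos_def (mpar q a b s j))"
proof -
  interpret dsm q n a b s using assms by (unfold_locales) auto
  have L: "\<And>j. j < n \<Longrightarrow> lpar q a b s j
            = mat_adjoint (Q2 q a b s j (complex_of_real a)) * minv (H2hat q a b s j)
              * Q2 q a b s j (complex_of_real a) \<and> pos_def (lpar q a b s j)"
  proof -
    fix j assume j: "j < n"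
    show "?thesis j" proof (cases "j = 0")
      case True show ?thesis unfolding True by (rule l0)
    next
      case False hence "1 \<le> j" by simp
      thus ?thesis using l_pos[of j] j by blast
    qed
  qed
  have M: "\<And>j. j \<le> n \<Longrightarrow> mpar q a b s j
            = mat_adjoint (Gamma1 q b s j (complex_of_real a)) * minv (K1hat q b s j)
              * Gamma1 q b s j (complex_of_real a) \<and> pos_def (mpar q a b s j)"
  proof -
    fix j assume j: "j \<le> n"
    show "?thesis j" proof (cases "j = 0")
      case True show ?thesis unfolding True by (rule m0)
    next
      case False hence "1 \<le> j" by simp
      thus ?thesis using m_pos[of j] j by blast
    qed
  qed
  show ?thesis using L M by blast
qed


end
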